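(* Let $k\geq2$ and let $L=(l_1,\dots,l_k)$ be generic and reduced positive integers with sum $n$. The vector-valued cocycle $\omega=(\omega_1,\dots,\omega_k)$ takes values in $\Lambda$ and, by evaluation on cycles, induces a group monomorphism $\widehat{\omega}:H_1(Tonn^{n,k}(L);\mathbb{Z})\to\Lambda$.
   Context: $L$ is generic if for all $I,J\subseteq[k]$, $\sum_{i\in I}l_i=\sum_{j\in J}l_j$ implies $I=J$; reduced if $\gcd(l_1,\dots,l_k)=1$. The generalized tonnetz $Tonn^{n,k}(L)$ is the simplicial complex on vertex set $\mathbb{Z}_n$ whose maximal simplices are $\Delta(x;\sigma)=\{x,\,x+l_{\sigma(1)},\dots,x+l_{\sigma(1)}+\dots+l_{\sigma(k-1)}\}$ for $x\in\mathbb{Z}_n$, $\sigma\in S_k$. The $L$-type of an oriented 1-simplex $(u,v)$ is the unique nonempty $I\subseteq[k]$ with $v-u\equiv\sum_{j\in I}l_j\pmod n$. For $i\neq j$, $\theta_{i,j}$ is the integral 1-cocycle with $\theta_{i,j}(X)=\chi_I(i)-\chi_I(j)$ for $X$ of $L$-type $I$, and $\omega_i=\sum_{j\neq i}\theta_{i,j}$; thus $\omega$ assigns to the oriented 1-simplex from $x$ to $x+l_m$ the vector $a_m=ke_m-(1,\dots,1)\in\mathbb{Z}^k$. $\Lambda=\{x\in\mathbb{Z}^k:\sum_i x_i=0\text{ and all }x_i\text{ are congruent mod }k\}$ (a lattice of type $\mathbb{A}^\ast_{k-1}$). *)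

theory Defs
  imports Main "HOL-Combinatorics.Permutations" "HOL-Number_Theory.Cong"
begin

text \<open>The parameter vector L = (l_1,...,l_k) is a list; index i (0-based) stands for l_(i+1).
  Vertices of Z_n are represented by the naturals 0..n-1.\<close>

definition generic :: "nat list \<Rightarrow> bool" where
  "generic L \<longleftrightarrow> (\<forall>I J. I \<subseteq> {0..<length L} \<longrightarrow> J \<subseteq> {0..<length L} \<longrightarrow>
      (\<Sum>i\<in>I. L!i) = (\<Sum>j\<in>J. L!j) \<longrightarrow> I = J)"

definition reduced :: "nat list \<Rightarrow> bool" where
  "reduced L \<longleftrightarrow> Gcd (set L) = 1"

abbreviation tn :: "nat list \<Rightarrow> nat" where "tn L \<equiv> sum_list L"

definition Delta :: "nat list \<Rightarrow> nat \<Rightarrow> (nat \<Rightarrow> nat) \<Rightarrow> nat set" where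
  "Delta L x \<sigma> = {(x + (\<Sum>t<j. L ! (\<sigma> t))) mod tn L | j. j < length L}"

definition is_max_simplex :: "nat list \<Rightarrow> nat set \<Rightarrow> bool" where
  "is_max_simplex L S \<longleftrightarrow> (\<exists>x<tn L. \<exists>\<sigma>. \<sigma> permutes {0..<length L} \<and> S = Delta L x \<sigma>)"

definition tonnetz_simplex :: "nat list \<Rightarrow> nat set \<Rightarrow> bool" where
  "tonnetz_simplex L S \<longleftrightarrow> S \<noteq> {} \<and> (\<exists>M. is_max_simplex L M \<and> S \<subseteq> M)"

text \<open>Oriented 1-simplices used as basis of 1-chains: (u,v) with u < v;
  oriented 2-simplices: (a,b,c) with a < b < c.\<close>
definition edge :: "nat list \<Rightarrow> nat \<Rightarrow> nat \<Rightarrow> bool" where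
  "edge L u v \<longleftrightarrow> u < v \<and> tonnetz_simplex L {u, v}"

definition triangle :: "nat list \<Rightarrow> nat \<Rightarrow> nat \<Rightarrow> nat \<Rightarrow> bool" where
  "triangle L a b c \<longleftrightarrow> a < b \<and> b < c \<and> tonnetz_simplex L {a, b, c}"

definition chain1 :: "nat list \<Rightarrow> (nat \<Rightarrow> nat \<Rightarrow> int) \<Rightarrow> bool" where
  "chain1 L c \<longleftrightarrow> (\<forall>u v. \<not> edge L u v \<longrightarrow> c u v = 0)"

definition chain2 :: "nat list \<Rightarrow> (nat \<Rightarrow> nat \<Rightarrow> nat \<Rightarrow> int) \<Rightarrow> bool" where
  "chain2 L d \<longleftrightarrow> (\<forall>a b c. \<not> triangle L a b c \<longrightarrow> d a b c = 0)"

text \<open>Boundary of a 1-chain (a 0-chain): d[u,v] = v - u.\<close>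
definition bd1 :: "nat list \<Rightarrow> (nat \<Rightarrow> nat \<Rightarrow> int) \<Rightarrow> nat \<Rightarrow> int" where
  "bd1 L c w = (\<Sum>u<tn L. c u w) - (\<Sum>v<tn L. c w v)"

definition cycle1 :: "nat list \<Rightarrow> (nat \<Rightarrow> nat \<Rightarrow> int) \<Rightarrow> bool" where
  "cycle1 L c \<longleftrightarrow> chain1 L c \<and> (\<forall>w. bd1 L c w = 0)"

text \<open>Boundary of a 2-chain: d[a,b,c] = [b,c] - [a,c] + [a,b].\<close>
definition bd2 :: "nat list \<Rightarrow> (nat \<Rightarrow> nat \<Rightarrow> nat \<Rightarrow> int) \<Rightarrow> nat \<Rightarrow> nat \<Rightarrow> int" where
  "bd2 L d u v = (if u < v then
      (\<Sum>w<tn L. d u v w) - (\<Sum>w<tn L. d u w v) + (\<Sum>w<tn L. d w u v) else 0)"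

definition Ltype :: "nat list \<Rightarrow> nat \<Rightarrow> nat \<Rightarrow> nat set" where
  "Ltype L u v = (THE I. I \<subseteq> {0..<length L} \<and> I \<noteq> {} \<and>
      [int v - int u = int (\<Sum>j\<in>I. L!j)] (mod int (tn L)))"

definition theta :: "nat list \<Rightarrow> nat \<Rightarrow> nat \<Rightarrow> nat \<Rightarrow> nat \<Rightarrow> int" where
  "theta L i j u v = (if i \<in> Ltype L u v then 1 else 0) - (if j \<in> Ltype L u v then 1 else 0)"

definition omega :: "nat list \<Rightarrow> nat \<Rightarrow> nat \<Rightarrow> nat \<Rightarrow> int" where
  "omega L i u v = (\<Sum>j\<in>{0..<length L} - {i}. theta L i j u v)"

definition omega_vec :: "nat list \<Rightarrow> nat \<Rightarrow> nat \<Rightarrow> nat \<Rightarrow> int" where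
  "omega_vec L u v = (\<lambda>i. if i < length L then omega L i u v else 0)"

definition omega_eval :: "nat list \<Rightarrow> (nat \<Rightarrow> nat \<Rightarrow> int) \<Rightarrow> nat \<Rightarrow> int" where
  "omega_eval L c = (\<lambda>i. \<Sum>u<tn L. \<Sum>v<tn L. c u v * omega_vec L u v i)"

definition Lambda :: "nat \<Rightarrow> (nat \<Rightarrow> int) set" where
  "Lambda k = {x. (\<forall>i\<ge>k. x i = 0) \<and> (\<Sum>i<k. x i) = 0 \<and>
      (\<forall>i<k. \<forall>j<k. [x i = x j] (mod int k))}"

end

theory Submission
  imports Defs "HOL-Library.Function_Algebras"
begin

locale tonn =
  fixes L :: "nat list"
  assumes k2: "length L \<ge> 2" and pos: "\<forall>l\<in>set L. l > 0"
    and gen: "generic L" and red: "reduced L"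
begin

abbreviation "n \<equiv> tn L"
abbreviation "k \<equiv> length L"
definition ll :: "nat \<Rightarrow> int" where "ll m = int (L!m)"
definition sI :: "nat set \<Rightarrow> int" where "sI I = (\<Sum>i\<in>I. ll i)"

lemma Lpos: "i < k \<Longrightarrow> L!i > 0" using pos nth_mem by blast

lemma n_eq: "int n = sI {0..<k}"
  unfolding sI_def ll_def by (simp add: sum_list_sum_nth)

lemma sI_nonneg: "sI I \<ge> 0" unfolding sI_def ll_def by (simp add: sum_nonneg)

lemma sI_pos: assumes "I \<subseteq> {0..<k}" "I \<noteq> {}" shows "sI I > 0"
proof -
  have "finite I" using assms(1) finite_subset by blast
  then show ?thesis unfolding sI_def ll_def
    using assms Lpos by (intro sum_pos) (auto simp: subset_iff)
qed

lemma sI_split: assumes "I \<subseteq> {0..<k}" shows "int n = sI I + sI ({0..<k} - I)"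
  unfolding n_eq sI_def using assms by (simp add: sum.subset_diff[of I "{0..<k}"])

lemma sI_le: "I \<subseteq> {0..<k} \<Longrightarrow> sI I \<le> int n"
  using sI_split sI_nonneg by fastforce

lemma sI_lt: assumes "I \<subseteq> {0..<k}" "I \<noteq> {0..<k}" shows "sI I < int n"
  using sI_split[OF assms(1)] sI_pos[of "{0..<k} - I"] assms by auto

lemma n_pos: "n > 0"
proof -
  have "L \<noteq> []" using k2 by auto
  then have "int n > 0" using sI_pos[of "{0..<k}"] n_eq by auto
  then show ?thesis by simp
qed

definition vx :: "int \<Rightarrow> nat" where "vx y = nat (y mod int n)"

lemma vx_lt: "vx y < n" unfolding vx_def using n_pos
  by (simp add: nat_less_iff)
lemma int_vx: "int (vx y) = y mod int n" unfolding vx_def using n_pos by simp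
lemma vx_int: "u < n \<Longrightarrow> vx (int u) = u" unfolding vx_def by simp
lemma vx_eq_iff: "vx a = vx b \<longleftrightarrow> a mod int n = b mod int n"
  by (metis int_vx of_nat_eq_iff)
lemma vx_per: "vx (y + int n * c) = vx y" by (simp add: vx_eq_iff)
lemma vx_add: "vx (x + int S) = (vx x + S) mod n"
  by (metis int_vx mod_add_left_eq nat_int of_nat_add of_nat_mod vx_def)
lemma vx_mod: "vx (y mod int n) = vx y" by (simp add: vx_eq_iff)

lemma vx_ne: assumes "0 < d" "d < int n" shows "vx y \<noteq> vx (y + d)"
proof
  assume "vx y = vx (y + d)"
  then have "(y + d) mod int n = y mod int n" by (simp add: vx_eq_iff)
  then have "int n dvd d" by (metis add.commute add_diff_cancel_right' mod_eq_dvd_iff)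
  with assms show False using zdvd_imp_le by fastforce
qed

lemma vx_cong: "vx y = v \<Longrightarrow> v < n \<Longrightarrow> [int v = y] (mod int n)"
  by (metis cong_def int_vx mod_mod_trivial)

end

context tonn begin

lemma perm_exists:
  assumes "A \<subseteq> B" "B \<subseteq> {0..<k}"
  shows "\<exists>\<sigma>. \<sigma> permutes {0..<k} \<and> \<sigma>`{..<card A} = A \<and> \<sigma>`{..<card B} = B"
proof -
  have fB: "finite B" using assms(2) finite_subset by blast
  have fA: "finite A" using assms(1) fB finite_subset by blast
  define xs where "xs = sorted_list_of_set A @ sorted_list_of_set (B - A) @ sorted_list_of_set ({0..<k} - B)"
  have dist: "distinct xs" using fA fB assms(1) by (auto simp: xs_def)
  have setxs: "set xs = {0..<k}" using assms fA fB by (auto simp: xs_def)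
  have len: "length xs = k" using distinct_card[OF dist] setxs by simp
  define \<sigma> where "\<sigma> t = (if t < k then xs!t else t)" for t
  have "bij_betw ((!) xs) {..<k} {0..<k}"
    using bij_betw_nth[OF dist] len setxs by simp
  moreover have "{..<k} = {0..<k}" by auto
  ultimately have "bij_betw ((!) xs) {0..<k} {0..<k}" by simp
  then have "bij_betw \<sigma> {0..<k} {0..<k}"
    by (rule bij_betw_cong[THEN iffD1, rotated]) (auto simp: \<sigma>_def)
  then have perm: "\<sigma> permutes {0..<k}"
    by (rule bij_imp_permutes) (auto simp: \<sigma>_def)
  have img: "\<sigma>`{..<j} = set (take j xs)" if "j \<le> k" for j
  proof -
    have "\<sigma>`{..<j} = (!) xs ` {0..<j}" using that by (auto simp: \<sigma>_def image_def)
    also have "\<dots> = set (take j xs)" using nth_image[of j xs] that len by simp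
    finally show ?thesis .
  qed
  have cB: "card B = card A + card (B - A)"
    using fB assms(1) card_Diff_subset[of A B] card_mono[of B A] fA
    by (simp add: card_mono)
  have cBk: "card B \<le> k" using card_mono[OF _ assms(2)] by simp
  have "take (card A) xs = sorted_list_of_set A" by (simp add: xs_def)
  moreover have "take (card B) xs = sorted_list_of_set A @ sorted_list_of_set (B - A)"
    by (simp add: xs_def cB)
  ultimately have "\<sigma>`{..<card A} = A" "\<sigma>`{..<card B} = B"
    using img[of "card A"] img[of "card B"] cBk cB fA fB assms(1) by auto
  then show ?thesis using perm by blast
qed

definition Sp :: "(nat \<Rightarrow> nat) \<Rightarrow> nat \<Rightarrow> int" where "Sp \<sigma> p = (\<Sum>t<p. ll (\<sigma> t))"

lemma Sp_eq: assumes "\<sigma> permutes {0..<k}" shows "Sp \<sigma> p = sI (\<sigma> ` {..<p})"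
  unfolding Sp_def sI_def
  by (subst sum.reindex) (auto intro: permutes_inj_on[OF assms])

lemma Delta_eq: assumes "x < n" shows "Delta L x \<sigma> = {vx (int x + Sp \<sigma> j) | j. j < k}"
proof -
  have "(x + (\<Sum>t<j. L ! (\<sigma> t))) mod n = vx (int x + Sp \<sigma> j)" for j
    using vx_add[of "int x" "\<Sum>t<j. L ! (\<sigma> t)"] assms
    by (simp add: Sp_def ll_def vx_int)
  then show ?thesis unfolding Delta_def by simp
qed

lemma vx_shift: "vx (int (vx x) + d) = vx (x + d)"
  by (simp add: vx_eq_iff int_vx mod_add_left_eq)

lemma simplex3:
  assumes "A \<subseteq> B" "B \<subseteq> {0..<k}" "B \<noteq> {0..<k}"
  shows "\<exists>M. is_max_simplex L M \<and> vx x \<in> M \<and> vx (x + sI A) \<in> M \<and> vx (x + sI B) \<in> M"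
proof -
  obtain \<sigma> where s: "\<sigma> permutes {0..<k}" "\<sigma>`{..<card A} = A" "\<sigma>`{..<card B} = B"
    using perm_exists[OF assms(1,2)] by blast
  have fB: "finite B" using assms(2) finite_subset by blast
  have cB: "card B < k" using psubset_card_mono[of "{0..<k}" B] assms by auto
  have cA: "card A < k" using card_mono[OF fB assms(1)] cB by simp
  define M where "M = Delta L (vx x) \<sigma>"
  have M: "M = {vx (x + Sp \<sigma> j) | j. j < k}"
    unfolding M_def using Delta_eq[OF vx_lt] vx_shift by simp
  have "is_max_simplex L M" unfolding is_max_simplex_def M_def using vx_lt s(1) by blast
  moreover have "vx x \<in> M" unfolding M using k2 by (auto intro!: exI[of _ 0] simp: Sp_def)
  moreover have "vx (x + sI A) \<in> M" unfolding M using cA Sp_eq[OF s(1), of "card A"] s(2)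
    by (auto intro!: exI[of _ "card A"])
  moreover have "vx (x + sI B) \<in> M" unfolding M using cB Sp_eq[OF s(1), of "card B"] s(3)
    by (auto intro!: exI[of _ "card B"])
  ultimately show ?thesis by blast
qed

end

context tonn begin

definition chi :: "nat set \<Rightarrow> nat \<Rightarrow> int" where "chi I i = (if i \<in> I then 1 else 0)"

lemma dvd_small: fixes d :: int assumes "int n dvd d" "\<bar>d\<bar> < int n" shows "d = 0"
proof (rule ccontr)
  assume "d \<noteq> 0"
  then have "\<bar>int n\<bar> \<le> \<bar>d\<bar>" using dvd_imp_le_int assms(1) by blast
  then show False using assms(2) by simp
qed

lemma cong_small_eq:
  fixes a b :: int assumes "0 < a" "a \<le> int n" "0 < b" "b \<le> int n" "[a = b] (mod int n)"
  shows "a = b"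
proof -
  have d: "int n dvd (a - b)" using assms(5) by (simp add: cong_iff_dvd_diff)
  have "a - b < int n" "- (a - b) < int n" using assms(1-4) by linarith+
  then have "\<bar>a - b\<bar> < int n" by (simp only: abs_less_iff)
  then have "a - b = 0" using dvd_small[OF d] by blast
  then show ?thesis by simp
qed

lemma sI_nat: "sI I = int (\<Sum>j\<in>I. L!j)" by (simp add: sI_def ll_def)

lemma Ltype_eq:
  assumes "I \<subseteq> {0..<k}" "I \<noteq> {}" "[int v - int u = sI I] (mod int n)"
  shows "Ltype L u v = I"
  unfolding Ltype_def
proof (rule the_equality)
  show "I \<subseteq> {0..<k} \<and> I \<noteq> {} \<and> [int v - int u = int (\<Sum>j\<in>I. L ! j)] (mod int (tn L))"
    using assms sI_nat by simp
next
  fix J assume J: "J \<subseteq> {0..<k} \<and> J \<noteq> {} \<and> [int v - int u = int (\<Sum>j\<in>J. L ! j)] (mod int (tn L))"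
  have c1: "[int v - int u = sI J] (mod int n)" using J by (simp only: sI_nat)
  have c2: "[sI J = sI I] (mod int n)" using cong_trans[OF cong_sym[OF c1] assms(3)] .
  have a: "0 < sI J" "sI J \<le> int n" using sI_pos sI_le J by auto
  have b: "0 < sI I" "sI I \<le> int n" using sI_pos sI_le assms by auto
  have "sI J = sI I" using cong_small_eq[OF a b c2] .
  then have "int (\<Sum>j\<in>J. L!j) = int (\<Sum>j\<in>I. L!j)" by (simp only: sI_nat)
  then have e: "(\<Sum>j\<in>J. L!j) = (\<Sum>j\<in>I. L!j)" by (simp only: of_nat_eq_iff)
  have G: "\<And>I J. I \<subseteq> {0..<k} \<Longrightarrow> J \<subseteq> {0..<k} \<Longrightarrow> (\<Sum>i\<in>I. L!i) = (\<Sum>j\<in>J. L!j) \<Longrightarrow> I = J"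
    using gen unfolding generic_def by blast
  show "J = I" using G[OF _ assms(1) e] J by blast
qed

lemma Sp_split: assumes "p \<le> q" shows "Sp \<sigma> q = Sp \<sigma> p + (\<Sum>t\<in>{p..<q}. ll (\<sigma> t))"
proof -
  have e: "{..<q} = {..<p} \<union> {p..<q}" using assms by auto
  have "Sp \<sigma> q = (\<Sum>t\<in>{..<p} \<union> {p..<q}. ll (\<sigma> t))" unfolding Sp_def e ..
  also have "\<dots> = Sp \<sigma> p + (\<Sum>t\<in>{p..<q}. ll (\<sigma> t))" unfolding Sp_def
    by (rule sum.union_disjoint) auto
  finally show ?thesis .
qed

lemma sum_img: assumes "\<sigma> permutes {0..<k}" shows "(\<Sum>t\<in>T. ll (\<sigma> t)) = sI (\<sigma> ` T)"
proof -
  have "inj_on \<sigma> T" using permutes_inj_on[OF assms] .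
  then show ?thesis unfolding sI_def using sum.reindex[of \<sigma> T ll] by simp
qed

lemma img_sub: assumes "\<sigma> permutes {0..<k}" "T \<subseteq> {0..<k}" shows "\<sigma> ` T \<subseteq> {0..<k}"
  using permutes_in_image[OF assms(1)] assms(2) by blast

lemma chi_aux: "(A \<longleftrightarrow> B \<or> C) \<Longrightarrow> \<not>(B \<and> C) \<Longrightarrow>
  (if A then 1 else 0::int) = (if B then 1 else 0) + (if C then 1 else 0)" by auto

lemma KL:
  assumes s: "\<sigma> permutes {0..<k}" and pq: "p < k" "q < k" "p \<noteq> q"
  defines "I \<equiv> (if p < q then \<sigma>`{p..<q} else {0..<k} - \<sigma>`{q..<p})"
  shows "I \<subseteq> {0..<k}" "I \<noteq> {}" "I \<noteq> {0..<k}"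
    "[Sp \<sigma> q - Sp \<sigma> p = sI I] (mod int n)"
    "\<And>i. i < k \<Longrightarrow> chi I i = chi (\<sigma>`{..<q}) i - chi (\<sigma>`{..<p}) i + (if q < p then 1 else 0)"
proof -
  have inj: "inj \<sigma>" using permutes_inj[OF s] .
  have mem: "\<And>t. \<sigma> t \<in> {0..<k} \<longleftrightarrow> t \<in> {0..<k}" using permutes_in_image[OF s] by blast
  show "I \<subseteq> {0..<k}" unfolding I_def using img_sub[OF s] pq by auto
  show "I \<noteq> {}"
  proof (cases "p < q")
    case True then show ?thesis unfolding I_def by auto
  next
    case False
    have "\<sigma> p \<in> {0..<k}" using mem pq by auto
    moreover have "\<sigma> p \<notin> \<sigma>`{q..<p}" using inj by (auto simp: inj_eq)
    ultimately show ?thesis unfolding I_def using False by auto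
  qed
  show "I \<noteq> {0..<k}"
  proof (cases "p < q")
    case True
    have "\<sigma> q \<in> {0..<k}" using mem pq by auto
    moreover have "\<sigma> q \<notin> \<sigma>`{p..<q}" using inj by (auto simp: inj_eq)
    ultimately show ?thesis unfolding I_def using True by auto
  next
    case False
    then have "\<sigma> q \<in> \<sigma>`{q..<p}" using pq by auto
    moreover have "\<sigma> q \<in> {0..<k}" using mem pq by auto
    ultimately have "\<sigma> q \<notin> I" "\<sigma> q \<in> {0..<k}" unfolding I_def using False by auto
    then show ?thesis by blast
  qed
  show "[Sp \<sigma> q - Sp \<sigma> p = sI I] (mod int n)"
  proof (cases "p < q")
    case True
    then show ?thesis unfolding I_def using Sp_split[of p q \<sigma>] sum_img[OF s] by simp
  next
    case False
    then have qp: "q < p" using pq by auto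
    have sub: "\<sigma>`{q..<p} \<subseteq> {0..<k}" using img_sub[OF s] pq by auto
    have "Sp \<sigma> q - Sp \<sigma> p = - sI (\<sigma>`{q..<p})"
      using Sp_split[of q p \<sigma>] qp sum_img[OF s] by simp
    also have "\<dots> = sI ({0..<k} - \<sigma>`{q..<p}) - int n" using sI_split[OF sub] by simp
    finally show ?thesis unfolding I_def using False
      by (simp add: cong_iff_dvd_diff)
  qed
  fix i assume i: "i < k"
  show "chi I i = chi (\<sigma>`{..<q}) i - chi (\<sigma>`{..<p}) i + (if q < p then 1 else 0)"
  proof (cases "p < q")
    case True
    have "\<sigma>`{..<q} = \<sigma>`{..<p} \<union> \<sigma>`{p..<q}" using True by (auto simp: image_Un[symmetric] ivl_disj_un)
    moreover have "\<sigma>`{..<p} \<inter> \<sigma>`{p..<q} = {}" using inj by (auto simp: inj_eq)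
    ultimately have U: "i \<in> \<sigma>`{..<q} \<longleftrightarrow> i \<in> \<sigma>`{..<p} \<or> i \<in> \<sigma>`{p..<q}"
      and D: "\<not> (i \<in> \<sigma>`{..<p} \<and> i \<in> \<sigma>`{p..<q})" by blast+
    have II: "I = \<sigma>`{p..<q}" using True I_def by simp
    show ?thesis unfolding II chi_def using True chi_aux[OF U D] by simp
  next
    case False
    then have qp: "q < p" using pq by auto
    have "\<sigma>`{..<p} = \<sigma>`{..<q} \<union> \<sigma>`{q..<p}" using qp by (auto simp: image_Un[symmetric] ivl_disj_un)
    moreover have "\<sigma>`{..<q} \<inter> \<sigma>`{q..<p} = {}" using inj by (auto simp: inj_eq)
    ultimately have U: "i \<in> \<sigma>`{..<p} \<longleftrightarrow> i \<in> \<sigma>`{..<q} \<or> i \<in> \<sigma>`{q..<p}"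
      and D: "\<not> (i \<in> \<sigma>`{..<q} \<and> i \<in> \<sigma>`{q..<p})" by blast+
    have II: "i \<in> I \<longleftrightarrow> \<not> i \<in> \<sigma>`{q..<p}" using False I_def i by simp
    have "chi I i = 1 - (if i \<in> \<sigma>`{q..<p} then 1 else 0)" unfolding chi_def using II by simp
    then show ?thesis unfolding chi_def using qp chi_aux[OF U D] by simp
  qed
qed

end

context tonn begin

lemma simplex_pos:
  assumes "tonnetz_simplex L S"
  obtains x \<sigma> where "\<sigma> permutes {0..<k}" "\<And>w. w \<in> S \<Longrightarrow> \<exists>p<k. w = vx (x + Sp \<sigma> p)"
proof -
  from assms obtain M where M: "is_max_simplex L M" "S \<subseteq> M" unfolding tonnetz_simplex_def by blast
  then obtain x \<sigma> where x: "x < n" "\<sigma> permutes {0..<k}" "M = Delta L x \<sigma>"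
    unfolding is_max_simplex_def by blast
  then have "M = {vx (int x + Sp \<sigma> j) | j. j < k}" using Delta_eq by simp
  then have "\<And>w. w \<in> S \<Longrightarrow> \<exists>p<k. w = vx (int x + Sp \<sigma> p)" using M(2) by blast
  then show thesis using that[of \<sigma> "int x"] x(2) by blast
qed

definition Ipq :: "(nat \<Rightarrow> nat) \<Rightarrow> nat \<Rightarrow> nat \<Rightarrow> nat set" where
  "Ipq \<sigma> p q = (if p < q then \<sigma>`{p..<q} else {0..<k} - \<sigma>`{q..<p})"

lemma Ltype_pos:
  assumes s: "\<sigma> permutes {0..<k}" and pq: "p < k" "q < k" "p \<noteq> q"
  shows "Ltype L (vx (x + Sp \<sigma> p)) (vx (x + Sp \<sigma> q)) = Ipq \<sigma> p q"
    "Ipq \<sigma> p q \<subseteq> {0..<k}" "Ipq \<sigma> p q \<noteq> {}" "Ipq \<sigma> p q \<noteq> {0..<k}"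
    "[int (vx (x + Sp \<sigma> q)) - int (vx (x + Sp \<sigma> p)) = sI (Ipq \<sigma> p q)] (mod int n)"
proof -
  note K = KL[OF s pq, folded Ipq_def]
  have "(int (vx (x + Sp \<sigma> q)) - int (vx (x + Sp \<sigma> p))) mod int n = (Sp \<sigma> q - Sp \<sigma> p) mod int n"
    unfolding int_vx by (simp add: mod_diff_eq)
  then have c: "[int (vx (x + Sp \<sigma> q)) - int (vx (x + Sp \<sigma> p)) = Sp \<sigma> q - Sp \<sigma> p] (mod int n)"
    unfolding cong_def .
  show "[int (vx (x + Sp \<sigma> q)) - int (vx (x + Sp \<sigma> p)) = sI (Ipq \<sigma> p q)] (mod int n)"
    using cong_trans[OF c K(4)] .
  then show "Ltype L (vx (x + Sp \<sigma> p)) (vx (x + Sp \<sigma> q)) = Ipq \<sigma> p q"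
    using Ltype_eq K(1,2) by blast
  show "Ipq \<sigma> p q \<subseteq> {0..<k}" "Ipq \<sigma> p q \<noteq> {}" "Ipq \<sigma> p q \<noteq> {0..<k}" using K by auto
qed

definition W :: "(nat \<Rightarrow> int) \<Rightarrow> nat \<Rightarrow> int" where
  "W y i = int k * y i - (\<Sum>m<k. y m)"

lemma card_chi: assumes "I \<subseteq> {0..<k}" shows "int (card I) = (\<Sum>m<k. chi I m)"
proof -
  have "(\<Sum>m\<in>{..<k} \<inter> I. (1::int)) = (\<Sum>m<k. if m \<in> I then 1 else 0)"
    by (rule sum.inter_restrict) simp
  then have "(\<Sum>m<k. chi I m) = (\<Sum>m\<in>{..<k} \<inter> I. 1)"
    unfolding chi_def by simp
  also have "{..<k} \<inter> I = I" using assms by auto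
  finally show ?thesis by simp
qed

lemma omega_W:
  assumes "Ltype L u v = I" "I \<subseteq> {0..<k}" "i < k"
  shows "omega L i u v = W (chi I) i"
proof -
  have "omega L i u v = (\<Sum>j\<in>{0..<k} - {i}. chi I i - chi I j)"
    unfolding omega_def theta_def chi_def assms(1) ..
  also have "\<dots> = (\<Sum>j\<in>{0..<k} - {i}. chi I i) - (\<Sum>j\<in>{0..<k}-{i}. chi I j)"
    by (simp add: sum_subtractf)
  also have "(\<Sum>j\<in>{0..<k} - {i}. chi I i) = (int k - 1) * chi I i"
    using assms(3) by simp
  also have "(\<Sum>j\<in>{0..<k}-{i}. chi I j) = (\<Sum>j\<in>{0..<k}. chi I j) - chi I i"
    using assms(3) by (simp add: sum_diff1)
  also have "(\<Sum>j\<in>{0..<k}. chi I j) = (\<Sum>j<k. chi I j)"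
    by (simp add: atLeast0LessThan)
  finally show ?thesis unfolding W_def by (simp add: algebra_simps)
qed

lemma W_shift: assumes "\<And>m. m < k \<Longrightarrow> y m = a m - b m + c" "i < k"
  shows "W y i = W a i - W b i"
proof -
  have "(\<Sum>m<k. y m) = (\<Sum>m<k. a m - b m + c)" by (rule sum.cong) (simp_all add: assms(1))
  also have "\<dots> = (\<Sum>m<k. a m) - (\<Sum>m<k. b m) + int k * c"
    by (simp add: sum.distrib sum_subtractf)
  finally have sy: "(\<Sum>m<k. y m) = (\<Sum>m<k. a m) - (\<Sum>m<k. b m) + int k * c" .
  have yi: "y i = a i - b i + c" using assms by simp
  show ?thesis unfolding W_def sy yi by (simp add: algebra_simps)
qed

lemma omega_pos:
  assumes s: "\<sigma> permutes {0..<k}" and pq: "p < k" "q < k" "p \<noteq> q" and i: "i < k"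
  shows "omega L i (vx (x + Sp \<sigma> p)) (vx (x + Sp \<sigma> q))
       = W (chi (\<sigma>`{..<q})) i - W (chi (\<sigma>`{..<p})) i"
proof -
  have "omega L i (vx (x + Sp \<sigma> p)) (vx (x + Sp \<sigma> q)) = W (chi (Ipq \<sigma> p q)) i"
    using omega_W[OF Ltype_pos(1)[OF s pq] Ltype_pos(2)[OF s pq] i] .
  also have "\<dots> = W (chi (\<sigma>`{..<q})) i - W (chi (\<sigma>`{..<p})) i"
    by (rule W_shift[OF _ i]) (use KL(5)[OF s pq] in \<open>simp add: Ipq_def\<close>)
  finally show ?thesis .
qed

end

context tonn begin

lemma W_sum: "(\<Sum>i<k. W y i) = 0"
  unfolding W_def by (simp add: sum_subtractf sum_distrib_left)

lemma W_cong: "[W y i = W y j] (mod int k)"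
proof -
  have "W y i - W y j = int k * (y i - y j)" unfolding W_def by (simp add: algebra_simps)
  then show ?thesis by (simp add: cong_iff_dvd_diff)
qed

lemma edge_pos:
  assumes "tonnetz_simplex L {u, v}" "u \<noteq> v"
  obtains x \<sigma> p q where "\<sigma> permutes {0..<k}" "p < k" "q < k" "p \<noteq> q"
    "u = vx (x + Sp \<sigma> p)" "v = vx (x + Sp \<sigma> q)"
proof -
  obtain \<sigma> x where s: "\<sigma> permutes {0..<k}" "\<And>w. w \<in> {u,v} \<Longrightarrow> \<exists>p<k. w = vx (x + Sp \<sigma> p)"
    by (rule simplex_pos[OF assms(1)]) blast
  obtain p where p: "p < k" "u = vx (x + Sp \<sigma> p)" using s(2) by blast
  obtain q where q: "q < k" "v = vx (x + Sp \<sigma> q)" using s(2) by blast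
  have "p \<noteq> q" using p q assms(2) by blast
  then show thesis using that s(1) p q by blast
qed

lemma part1:
  assumes "tonnetz_simplex L {u, v}" "u \<noteq> v"
  shows "omega_vec L u v \<in> Lambda k"
proof -
  obtain x \<sigma> p q where e: "\<sigma> permutes {0..<k}" "p < k" "q < k" "p \<noteq> q"
    "u = vx (x + Sp \<sigma> p)" "v = vx (x + Sp \<sigma> q)"
    by (rule edge_pos[OF assms])
  define I where "I = Ipq \<sigma> p q"
  have T1: "Ltype L u v = I" unfolding e(5,6) I_def by (rule Ltype_pos(1)[OF e(1-4)])
  have T2: "I \<subseteq> {0..<k}" unfolding I_def by (rule Ltype_pos(2)[OF e(1-4)])
  have om: "omega_vec L u v i = (if i < k then W (chi I) i else 0)" for i
    unfolding omega_vec_def using omega_W[OF T1 T2] by simp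
  have "(\<Sum>i<k. omega_vec L u v i) = (\<Sum>i<k. W (chi I) i)" using om by simp
  also have "\<dots> = 0" by (rule W_sum)
  finally have s: "(\<Sum>i<k. omega_vec L u v i) = 0" .
  have a: "\<forall>i\<ge>k. omega_vec L u v i = 0" using om by simp
  have b: "\<forall>i<k. \<forall>j<k. [omega_vec L u v i = omega_vec L u v j] (mod int k)"
    using om W_cong by simp
  show ?thesis unfolding Lambda_def using a b s by blast
qed

lemma cocycle:
  assumes "triangle L a b c" "i < k"
  shows "omega L i a b - omega L i a c + omega L i b c = 0"
proof -
  have t: "tonnetz_simplex L {a, b, c}" "a < b" "b < c" using assms(1) unfolding triangle_def by auto
  obtain \<sigma> x where s: "\<sigma> permutes {0..<k}" "\<And>w. w \<in> {a,b,c} \<Longrightarrow> \<exists>p<k. w = vx (x + Sp \<sigma> p)"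
    by (rule simplex_pos[OF t(1)]) blast
  obtain pa where pa: "pa < k" "a = vx (x + Sp \<sigma> pa)" using s(2) by blast
  obtain pb where pb: "pb < k" "b = vx (x + Sp \<sigma> pb)" using s(2) by blast
  obtain pc where pc: "pc < k" "c = vx (x + Sp \<sigma> pc)" using s(2) by blast
  have "a \<noteq> b" "a \<noteq> c" "b \<noteq> c" using t by simp_all
  then have d: "pa \<noteq> pb" "pa \<noteq> pc" "pb \<noteq> pc" using pa(2) pb(2) pc(2) by metis+
  show ?thesis
    unfolding pa(2) pb(2) pc(2)
    using omega_pos[OF s(1) pa(1) pb(1) d(1) assms(2)] omega_pos[OF s(1) pa(1) pc(1) d(2) assms(2)]
      omega_pos[OF s(1) pb(1) pc(1) d(3) assms(2)] by simp
qed

lemma chain2_zero: "chain2 L d \<Longrightarrow> \<not> triangle L a b c \<Longrightarrow> d a b c = 0"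
  unfolding chain2_def by blast

lemma part2:
  assumes d: "chain2 L d"
  shows "omega_eval L (bd2 L d) = (\<lambda>_. 0)"
proof
  fix i
  show "omega_eval L (bd2 L d) i = 0"
  proof (cases "i < k")
    case False then show ?thesis unfolding omega_eval_def omega_vec_def by simp
  next
    case True
    define w where "w u v = omega L i u v" for u v
    have ov: "omega_vec L u v i = w u v" for u v unfolding omega_vec_def w_def using True by simp
    have tri: "d a b c \<noteq> 0 \<Longrightarrow> a < b \<and> b < c" for a b c
      using chain2_zero[OF d] unfolding triangle_def by blast
    have trm: "bd2 L d u v * w u v =
       (\<Sum>x<n. d u v x * w u v) - (\<Sum>x<n. d u x v * w u v) + (\<Sum>x<n. d x u v * w u v)" for u v
    proof (cases "u < v")
      case True then show ?thesis unfolding bd2_def by (simp only: if_True sum_distrib_right ring_distribs)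
    next
      case False
      have "d u v x = 0" for x using tri[of u v x] False by blast
      moreover have "d u x v = 0" for x using tri[of u x v] False by (meson less_trans)
      moreover have "d x u v = 0" for x using tri[of x u v] False by blast
      ultimately show ?thesis unfolding bd2_def using False by simp
    qed
    have "omega_eval L (bd2 L d) i = (\<Sum>u<n. \<Sum>v<n. bd2 L d u v * w u v)"
      unfolding omega_eval_def ov ..
    also have "\<dots> = (\<Sum>u<n. \<Sum>v<n. \<Sum>x<n. d u v x * w u v)
        - (\<Sum>u<n. \<Sum>v<n. \<Sum>x<n. d u x v * w u v) + (\<Sum>u<n. \<Sum>v<n. \<Sum>x<n. d x u v * w u v)"
      unfolding trm by (simp only: sum.distrib sum_subtractf)
    also have "(\<Sum>u<n. \<Sum>v<n. \<Sum>x<n. d u x v * w u v) = (\<Sum>u<n. \<Sum>v<n. \<Sum>x<n. d u v x * w u x)"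
      by (rule sum.cong[OF refl], rule sum.swap)
    also have "(\<Sum>u<n. \<Sum>v<n. \<Sum>x<n. d x u v * w u v) = (\<Sum>u<n. \<Sum>v<n. \<Sum>x<n. d u v x * w v x)"
    proof -
      have "(\<Sum>u<n. \<Sum>v<n. \<Sum>x<n. d x u v * w u v) = (\<Sum>u<n. \<Sum>x<n. \<Sum>v<n. d x u v * w u v)"
        by (rule sum.cong[OF refl], rule sum.swap)
      also have "\<dots> = (\<Sum>x<n. \<Sum>u<n. \<Sum>v<n. d x u v * w u v)" by (rule sum.swap)
      finally show ?thesis .
    qed
    also have "(\<Sum>u<n. \<Sum>v<n. \<Sum>x<n. d u v x * w u v) - (\<Sum>u<n. \<Sum>v<n. \<Sum>x<n. d u v x * w u x)
        + (\<Sum>u<n. \<Sum>v<n. \<Sum>x<n. d u v x * w v x)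
        = (\<Sum>u<n. \<Sum>v<n. \<Sum>x<n. d u v x * (w u v - w u x + w v x))"
      by (simp only: ring_distribs sum_subtractf sum.distrib)
    finally have "omega_eval L (bd2 L d) i =
        (\<Sum>u<n. \<Sum>v<n. \<Sum>x<n. d u v x * (w u v - w u x + w v x))" .
    also have "\<dots> = 0"
    proof (intro sum.neutral ballI)
      fix a b c
      show "d a b c * (w a b - w a c + w b c) = 0"
      proof (cases "d a b c = 0")
        case False
        then have "triangle L a b c" using chain2_zero[OF d] by blast
        then show ?thesis using cocycle[OF _ True] unfolding w_def by simp
      qed simp
    qed
    finally show ?thesis .
  qed
qed

end

context tonn begin

definition oe :: "nat \<Rightarrow> nat \<Rightarrow> nat \<Rightarrow> nat \<Rightarrow> int" where
  "oe a b = (\<lambda>u v. if a < b \<and> u = a \<and> v = b then 1 else if b < a \<and> u = b \<and> v = a then -1 else 0)"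

lemma oe_anti: "oe b a = - oe a b"
  unfolding oe_def by (rule ext)+ auto

lemma oe_self: "oe a a = 0"
  unfolding oe_def by (rule ext)+ auto

definition bnd :: "(nat \<Rightarrow> nat \<Rightarrow> int) \<Rightarrow> bool" where
  "bnd z \<longleftrightarrow> (\<exists>d. chain2 L d \<and> z = bd2 L d)"

definition smul :: "int \<Rightarrow> (nat \<Rightarrow> nat \<Rightarrow> int) \<Rightarrow> (nat \<Rightarrow> nat \<Rightarrow> int)" where
  "smul c z = (\<lambda>u v. c * z u v)"

lemma bnd_0: "bnd 0"
proof -
  have "chain2 L (\<lambda>_ _ _. 0)" unfolding chain2_def by simp
  moreover have "(0::nat\<Rightarrow>nat\<Rightarrow>int) = bd2 L (\<lambda>_ _ _. 0)" unfolding bd2_def by (rule ext)+ simp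
  ultimately show ?thesis unfolding bnd_def by blast
qed

lemma bnd_add: assumes "bnd a" "bnd b" shows "bnd (a + b)"
proof -
  obtain d1 where d1: "chain2 L d1" "a = bd2 L d1" using assms(1) unfolding bnd_def by blast
  obtain d2 where d2: "chain2 L d2" "b = bd2 L d2" using assms(2) unfolding bnd_def by blast
  have "chain2 L (\<lambda>x y z. d1 x y z + d2 x y z)" using d1 d2 unfolding chain2_def by simp
  moreover have "a + b = bd2 L (\<lambda>x y z. d1 x y z + d2 x y z)"
    unfolding d1(2) d2(2) bd2_def by (rule ext)+ (simp add: sum.distrib)
  ultimately show ?thesis unfolding bnd_def by blast
qed

lemma bnd_smul: assumes "bnd a" shows "bnd (smul c a)"
proof -
  obtain d1 where d1: "chain2 L d1" "a = bd2 L d1" using assms(1) unfolding bnd_def by blast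
  have "chain2 L (\<lambda>x y z. c * d1 x y z)" using d1 unfolding chain2_def by simp
  moreover have "smul c a = bd2 L (\<lambda>x y z. c * d1 x y z)"
    unfolding d1(2) bd2_def smul_def by (rule ext)+ (simp add: sum_distrib_left algebra_simps)
  ultimately show ?thesis unfolding bnd_def by blast
qed

lemma smul_m1: "smul (-1) a = - a" unfolding smul_def by (rule ext)+ simp

lemma bnd_uminus: "bnd a \<Longrightarrow> bnd (- a)" using bnd_smul[of a "-1"] smul_m1 by simp

lemma bnd_diff: "bnd a \<Longrightarrow> bnd b \<Longrightarrow> bnd (a - b)"
  using bnd_add[of a "- b"] bnd_uminus[of b] by simp

lemma bnd_sum: "finite S \<Longrightarrow> (\<And>x. x \<in> S \<Longrightarrow> bnd (f x)) \<Longrightarrow> bnd (\<Sum>x\<in>S. f x)"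
  by (induction S rule: finite_induct) (auto intro: bnd_add bnd_0)

lemma simplex_lt: assumes "tonnetz_simplex L S" "w \<in> S" shows "w < n"
proof -
  obtain \<sigma> x where s: "\<And>w. w \<in> S \<Longrightarrow> \<exists>p<k. w = vx (x + Sp \<sigma> p)"
    by (rule simplex_pos[OF assms(1)]) blast
  then show ?thesis using assms(2) vx_lt by blast
qed

lemma sum_ind: assumes "r < n" shows "(\<Sum>w<n. if P \<and> w = r then (1::int) else 0) = (if P then 1 else 0)"
  using assms by (cases P) simp_all

lemma tri_sorted:
  assumes "p < q" "q < r" "tonnetz_simplex L {p, q, r}"
  shows "bnd (oe p q + oe q r + oe r p)"
proof -
  define d where "d a b c = (if a = p \<and> b = q \<and> c = r then (1::int) else 0)" for a b c
  have ch: "chain2 L d" unfolding chain2_def triangle_def d_def using assms by auto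
  have pn: "p < n" "q < n" "r < n" using simplex_lt[OF assms(3)] by auto
  have e1: "(\<Sum>w<n. d u v w) = (if u = p \<and> v = q then 1 else 0)" for u v
    unfolding d_def using sum_ind[OF pn(3), of "u = p \<and> v = q"] by (simp add: conj_assoc)
  have e2: "(\<Sum>w<n. d u w v) = (if u = p \<and> v = r then 1 else 0)" for u v
  proof -
    have "(\<Sum>w<n. d u w v) = (\<Sum>w<n. if (u = p \<and> v = r) \<and> w = q then 1 else 0)"
      unfolding d_def by (rule sum.cong) auto
    then show ?thesis using sum_ind[OF pn(2), of "u = p \<and> v = r"] by (simp only: conj_assoc)
  qed
  have e3: "(\<Sum>w<n. d w u v) = (if u = q \<and> v = r then 1 else 0)" for u v
  proof -
    have "(\<Sum>w<n. d w u v) = (\<Sum>w<n. if (u = q \<and> v = r) \<and> w = p then 1 else 0)"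
      unfolding d_def by (rule sum.cong) auto
    then show ?thesis using sum_ind[OF pn(1), of "u = q \<and> v = r"] by (simp only: conj_assoc)
  qed
  have "oe p q + oe q r + oe r p = bd2 L d"
  proof (rule ext, rule ext)
    fix u v
    show "(oe p q + oe q r + oe r p) u v = bd2 L d u v"
      unfolding bd2_def e1 e2 e3 oe_def using assms(1,2) by auto
  qed
  then show ?thesis unfolding bnd_def using ch by blast
qed

lemma tri_bnd:
  assumes "tonnetz_simplex L {a, b, c}" "a \<noteq> b" "b \<noteq> c" "a \<noteq> c"
  shows "bnd (oe a b + oe b c + oe c a)"
proof -
  have s: "{a,b,c} = {a,c,b}" "{a,b,c} = {b,a,c}" "{a,b,c} = {b,c,a}" "{a,b,c} = {c,a,b}" "{a,b,c} = {c,b,a}"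
    by auto
  consider "a < b" "b < c" | "a < c" "c < b" | "b < a" "a < c" | "b < c" "c < a" | "c < a" "a < b" | "c < b" "b < a"
    using assms(2-4) by linarith
  then show ?thesis
  proof cases
    case 1 then show ?thesis using tri_sorted assms(1) by blast
  next
    case 2
    then have "bnd (oe a c + oe c b + oe b a)" using tri_sorted assms(1) s by metis
    then have "bnd (- (oe a c + oe c b + oe b a))" by (rule bnd_uminus)
    then show ?thesis by (simp add: oe_anti[of a c] oe_anti[of c b] oe_anti[of b a] algebra_simps)
  next
    case 3
    then have "bnd (oe b a + oe a c + oe c b)" using tri_sorted assms(1) s by metis
    then have "bnd (- (oe b a + oe a c + oe c b))" by (rule bnd_uminus)
    then show ?thesis by (simp add: oe_anti[of a c] oe_anti[of c b] oe_anti[of b a] algebra_simps)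
  next
    case 4
    then have "bnd (oe b c + oe c a + oe a b)" using tri_sorted assms(1) s by metis
    then show ?thesis by (simp add: algebra_simps)
  next
    case 5
    then have "bnd (oe c a + oe a b + oe b c)" using tri_sorted assms(1) s by metis
    then show ?thesis by (simp add: algebra_simps)
  next
    case 6
    then have "bnd (oe c b + oe b a + oe a c)" using tri_sorted assms(1) s by metis
    then have "bnd (- (oe c b + oe b a + oe a c))" by (rule bnd_uminus)
    then show ?thesis by (simp add: oe_anti[of a c] oe_anti[of c b] oe_anti[of b a] algebra_simps)
  qed
qed

end

lemma sum_app: "(\<Sum>x\<in>S. f x) a = (\<Sum>x\<in>S. f x a)"
  by (induction S rule: infinite_finite_induct) auto

lemma sum_app2: "(\<Sum>x\<in>S. f x) a b = (\<Sum>x\<in>S. f x a b)"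
  by (induction S rule: infinite_finite_induct) auto

definition isum :: "(int \<Rightarrow> 'a::ab_group_add) \<Rightarrow> int \<Rightarrow> int \<Rightarrow> 'a" where
  "isum g a b = (if a \<le> b then (\<Sum>s\<in>{a..<b}. g s) else - (\<Sum>s\<in>{b..<a}. g s))"

lemma isum_cat: fixes a b c :: int assumes "a \<le> b" "b \<le> c"
  shows "(\<Sum>s\<in>{a..<b}. g s) + (\<Sum>s\<in>{b..<c}. g s) = (\<Sum>s\<in>{a..<c}. g s)"
proof -
  have "{a..<c} = {a..<b} \<union> {b..<c}" using assms by auto
  then show ?thesis by (simp add: sum.union_disjoint)
qed

lemma isum_add: "isum g a b + isum g b c = isum g a c"
proof -
  consider "a \<le> b" "b \<le> c" | "a \<le> c" "c \<le> b" | "b \<le> a" "a \<le> c" | "b \<le> c" "c \<le> a"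
    | "c \<le> a" "a \<le> b" | "c \<le> b" "b \<le> a" by linarith
  then show ?thesis
  proof cases
    case 1 then show ?thesis unfolding isum_def using isum_cat[OF 1, of g] by auto
  next
    case 2 then show ?thesis unfolding isum_def using isum_cat[OF 2, of g]
      by (cases "b = c") (auto simp: algebra_simps)
  next
    case 3 then show ?thesis unfolding isum_def using isum_cat[OF 3, of g]
      by (cases "a = b") (auto simp: algebra_simps)
  next
    case 4 then show ?thesis unfolding isum_def using isum_cat[OF 4, of g]
      by (cases "c = a") (auto simp: algebra_simps)
  next
    case 5 then show ?thesis unfolding isum_def using isum_cat[OF 5, of g]
      by (cases "a = c") (auto simp: algebra_simps)
  next
    case 6 then show ?thesis unfolding isum_def using isum_cat[OF 6, of g]
      by (cases "b = c"; cases "a = b") (auto simp: algebra_simps)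
  qed
qed

lemma sum_shift_int: "(\<Sum>s\<in>{a..<b::int}. g s) = (\<Sum>s\<in>{a - c..<b - c}. g (s + c))"
  by (rule sum.reindex_bij_witness[of _ "\<lambda>s. s + c" "\<lambda>s. s - c"]) auto

lemma isum_shift: "isum g a b = isum (\<lambda>s. g (s + c)) (a - c) (b - c)"
  unfolding isum_def using sum_shift_int[of g a b c] sum_shift_int[of g b a c] by auto

lemma isum_0: "isum g a a = 0" unfolding isum_def by simp
lemma isum_1: "isum g 0 1 = g 0"
proof -
  have "{0..<1::int} = {0}" by auto
  then show ?thesis unfolding isum_def by simp
qed

context tonn begin

definition step :: "int \<Rightarrow> nat \<Rightarrow> nat \<Rightarrow> nat \<Rightarrow> int" where
  "step y m = oe (vx y) (vx (y + ll m))"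

definition Q :: "int \<Rightarrow> nat \<Rightarrow> int \<Rightarrow> nat \<Rightarrow> nat \<Rightarrow> int" where
  "Q y m a = isum (\<lambda>s. step (y + s * ll m) m) 0 a"

lemma Q_add: "Q y m (a + b) = Q y m a + Q (y + a * ll m) m b"
proof -
  have "Q y m (a + b) = Q y m a + isum (\<lambda>s. step (y + s * ll m) m) a (a + b)"
    unfolding Q_def using isum_add[of "\<lambda>s. step (y + s * ll m) m" 0 a "a + b"] by simp
  also have "isum (\<lambda>s. step (y + s * ll m) m) a (a + b) = Q (y + a * ll m) m b"
    unfolding Q_def using isum_shift[of "\<lambda>s. step (y + s * ll m) m" a "a + b" a]
    by (simp add: algebra_simps)
  finally show ?thesis .
qed

lemma Q_0: "Q y m 0 = 0" unfolding Q_def by (rule isum_0)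
lemma Q_1: "Q y m 1 = step y m" unfolding Q_def using isum_1[of "\<lambda>s. step (y + s * ll m) m"] by simp

lemma step_per: "step (y + int n * c) m = step y m"
  unfolding step_def using vx_per[of y c] vx_per[of "y + ll m" c] by (simp add: algebra_simps)

lemma Q_per: "Q (y + int n * c) m a = Q y m a"
proof -
  have "(\<lambda>s. step (y + int n * c + s * ll m) m) = (\<lambda>s. step (y + s * ll m) m)"
    using step_per[of "y + s * ll m" c m for s] by (simp add: algebra_simps)
  then show ?thesis unfolding Q_def by simp
qed

primrec PL :: "int \<Rightarrow> nat list \<Rightarrow> (nat \<Rightarrow> int) \<Rightarrow> nat \<Rightarrow> nat \<Rightarrow> int" where
  "PL x [] v = 0"
| "PL x (m # ms) v = Q x m (v m) + PL (x + v m * ll m) ms v"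

definition dl :: "nat list \<Rightarrow> (nat \<Rightarrow> int) \<Rightarrow> int" where
  "dl ms v = sum_list (map (\<lambda>m. v m * ll m) ms)"

lemma dl_simps[simp]: "dl [] v = 0" "dl (m # ms) v = v m * ll m + dl ms v"
  "dl (ms1 @ ms2) v = dl ms1 v + dl ms2 v"
  unfolding dl_def by simp_all

lemma PL_append: "PL x (ms1 @ ms2) v = PL x ms1 v + PL (x + dl ms1 v) ms2 v"
  by (induction ms1 arbitrary: x) (simp_all add: algebra_simps)

lemma PL_cong: "(\<And>i. i \<in> set ms \<Longrightarrow> v i = w i) \<Longrightarrow> PL x ms v = PL x ms w"
  by (induction ms arbitrary: x) simp_all

lemma dl_cong: "(\<And>i. i \<in> set ms \<Longrightarrow> v i = w i) \<Longrightarrow> dl ms v = dl ms w"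
  by (induction ms) simp_all

lemma PL_per: "PL (x + int n * c) ms v = PL x ms v"
proof (induction ms arbitrary: x)
  case Nil then show ?case by simp
next
  case (Cons a ms)
  have e: "x + int n * c + v a * ll a = (x + v a * ll a) + int n * c" by simp
  show ?case by (simp only: PL.simps Q_per e Cons.IH)
qed

lemma PL_zero: "(\<And>i. i \<in> set ms \<Longrightarrow> v i = 0) \<Longrightarrow> PL x ms v = 0"
  by (induction ms arbitrary: x) (simp_all add: Q_0)

definition P :: "int \<Rightarrow> (nat \<Rightarrow> int) \<Rightarrow> nat \<Rightarrow> nat \<Rightarrow> int" where
  "P x v = PL x [0..<k] v"

definition dot :: "(nat \<Rightarrow> int) \<Rightarrow> int" where
  "dot v = dl [0..<k] v"

lemma dot_sum: "dot v = (\<Sum>m<k. v m * ll m)"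
  unfolding dot_def dl_def by (simp add: sum_list_sum_nth atLeast0LessThan)

lemma P_cong: "(\<And>i. i < k \<Longrightarrow> v i = w i) \<Longrightarrow> P x v = P x w"
  unfolding P_def by (rule PL_cong) simp

lemma dot_cong: "(\<And>i. i < k \<Longrightarrow> v i = w i) \<Longrightarrow> dot v = dot w"
  unfolding dot_def by (rule dl_cong) simp

lemma P_per: "P (x + int n * c) v = P x v" unfolding P_def by (rule PL_per)

lemma P_zero: "P x (\<lambda>_. 0) = 0" unfolding P_def by (rule PL_zero) simp

definition eqv :: "(nat \<Rightarrow> nat \<Rightarrow> int) \<Rightarrow> (nat \<Rightarrow> nat \<Rightarrow> int) \<Rightarrow> bool" (infix "\<approx>" 50) where
  "a \<approx> b \<longleftrightarrow> bnd (a - b)"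

lemma eqv_refl: "a \<approx> a" unfolding eqv_def using bnd_0 by simp
lemma eqv_sym: "a \<approx> b \<Longrightarrow> b \<approx> a" unfolding eqv_def using bnd_uminus by fastforce
lemma eqv_trans: "a \<approx> b \<Longrightarrow> b \<approx> c \<Longrightarrow> a \<approx> c"
  unfolding eqv_def using bnd_add by fastforce
lemma eqv_add: "a \<approx> a' \<Longrightarrow> b \<approx> b' \<Longrightarrow> a + b \<approx> a' + b'"
  unfolding eqv_def using bnd_add by (fastforce simp: algebra_simps)
lemma eqv_uminus: "a \<approx> b \<Longrightarrow> - a \<approx> - b"
  unfolding eqv_def using bnd_uminus by (fastforce simp: algebra_simps)
lemma eqv_diff: "a \<approx> a' \<Longrightarrow> b \<approx> b' \<Longrightarrow> a - b \<approx> a' - b'"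
  using eqv_add[of a a' "-b" "-b'"] eqv_uminus[of b b'] by simp
lemma eqv_bnd: "bnd a \<Longrightarrow> a \<approx> 0" unfolding eqv_def by simp
lemma eqv_eq: "a = b \<Longrightarrow> a \<approx> b" using eqv_refl by simp
lemma bnd_eqv: "a \<approx> b \<Longrightarrow> bnd b \<Longrightarrow> bnd a"
  unfolding eqv_def using bnd_add by fastforce
lemma eqv_smul: "a \<approx> b \<Longrightarrow> smul c a \<approx> smul c b"
proof -
  assume "a \<approx> b"
  then have "bnd (smul c (a - b))" unfolding eqv_def by (rule bnd_smul)
  moreover have "smul c (a - b) = smul c a - smul c b" by (rule ext)+ (simp add: smul_def algebra_simps)
  ultimately show ?thesis unfolding eqv_def by simp
qed
lemma eqv_sum: "finite S \<Longrightarrow> (\<And>x. x \<in> S \<Longrightarrow> f x \<approx> g x) \<Longrightarrow> (\<Sum>x\<in>S. f x) \<approx> (\<Sum>x\<in>S. g x)"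
  by (induction S rule: finite_induct) (auto intro: eqv_add eqv_refl)

end

context tonn begin

lemma eq_eqv_trans[trans]: "a = b \<Longrightarrow> b \<approx> c \<Longrightarrow> a \<approx> c" by simp
lemma eqv_eq_trans[trans]: "a \<approx> b \<Longrightarrow> b = c \<Longrightarrow> a \<approx> c" by simp
lemmas [trans] = eqv_trans

lemma ll_sI: "sI {j} = ll j" unfolding sI_def by simp
lemma ll_sI2: "j \<noteq> m \<Longrightarrow> sI {j, m} = ll j + ll m" unfolding sI_def by simp

lemma sI_diff: assumes "A \<subseteq> B" "B \<subseteq> {0..<k}" shows "sI B = sI A + sI (B - A)"
proof -
  have "finite B" using assms(2) finite_subset by blast
  then show ?thesis unfolding sI_def using assms(1) by (simp add: sum.subset_diff[of A B])
qed

lemma tri_chain: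
  assumes "A \<subseteq> B" "B \<subseteq> {0..<k}" "B \<noteq> {0..<k}" "A \<noteq> {}" "A \<noteq> B"
  shows "bnd (oe (vx x) (vx (x + sI A)) + oe (vx (x + sI A)) (vx (x + sI B)) + oe (vx (x + sI B)) (vx x))"
proof -
  obtain M where M: "is_max_simplex L M" "vx x \<in> M" "vx (x + sI A) \<in> M" "vx (x + sI B) \<in> M"
    using simplex3[OF assms(1-3)] by blast
  have ts: "tonnetz_simplex L {vx x, vx (x + sI A), vx (x + sI B)}"
    unfolding tonnetz_simplex_def using M by blast
  have A1: "A \<subseteq> {0..<k}" using assms by blast
  have p1: "0 < sI A" "sI A < int n" using sI_pos[OF A1 assms(4)] sI_lt[OF A1] sI_le[OF assms(2)]
      sI_lt[OF assms(2,3)] sI_diff[OF assms(1,2)] sI_nonneg[of "B - A"] by linarith+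
  have BA: "B - A \<subseteq> {0..<k}" "B - A \<noteq> {}" using assms by blast+
  have p2: "0 < sI (B - A)" "sI (B - A) < int n" using sI_pos[OF BA] sI_lt[OF assms(2,3)]
      sI_diff[OF assms(1,2)] sI_nonneg[of A] by linarith+
  have p3: "0 < sI B" "sI B < int n" using p1 p2 sI_diff[OF assms(1,2)] sI_lt[OF assms(2,3)] by linarith+
  have d1: "vx x \<noteq> vx (x + sI A)" by (rule vx_ne[OF p1])
  have d2: "vx (x + sI A) \<noteq> vx (x + sI B)"
    using vx_ne[OF p2, of "x + sI A"] sI_diff[OF assms(1,2)] by (simp add: add.assoc)
  have d3: "vx x \<noteq> vx (x + sI B)" by (rule vx_ne[OF p3])
  show ?thesis using tri_bnd[OF ts d1 d2 d3] .
qed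

lemma ll_pos: "j < k \<Longrightarrow> 0 < ll j" using Lpos unfolding ll_def by simp

lemma sq_unit:
  assumes "j < k" "m < k" "j \<noteq> m"
  shows "bnd (step z j + step (z + ll j) m - step z m - step (z + ll m) j)"
proof (cases "{j, m} = {0..<k}")
  case True
  have "sI {j, m} = int n" using True n_eq by simp
  then have e: "ll j + ll m = int n" using ll_sI2[OF assms(3)] by simp
  have "vx (z + ll j + ll m) = vx z" using vx_per[of z 1] e by (simp add: add.assoc)
  moreover have "vx (z + ll m + ll j) = vx z" using vx_per[of z 1] e by (simp add: algebra_simps)
  ultimately have "step z j + step (z + ll j) m - step z m - step (z + ll m) j
     = (oe (vx z) (vx (z + ll j)) + oe (vx (z + ll j)) (vx z))
     - (oe (vx z) (vx (z + ll m)) + oe (vx (z + ll m)) (vx z))"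
    unfolding step_def by simp
  also have "\<dots> = 0" using oe_anti[of "vx (z + ll j)" "vx z"] oe_anti[of "vx (z + ll m)" "vx z"] by simp
  finally show ?thesis using bnd_0 by simp
next
  case False
  have s1: "{j} \<subseteq> {j, m}" "{j, m} \<subseteq> {0..<k}" "{j} \<noteq> {}" "{j} \<noteq> {j, m}" using assms by auto
  have s2: "{m} \<subseteq> {j, m}" "{m} \<noteq> {}" "{m} \<noteq> {j, m}" using assms by auto
  note T1 = tri_chain[OF s1(1,2) False s1(3,4), of z]
  note T2 = tri_chain[OF s2(1) s1(2) False s2(2,3), of z]
  have e1: "vx (z + ll j + ll m) = vx (z + sI {j, m})" using ll_sI2[OF assms(3)] by (simp add: add.assoc)
  have e2: "vx (z + ll m + ll j) = vx (z + sI {j, m})" using ll_sI2[OF assms(3)] by (simp add: algebra_simps)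
  have "step z j + step (z + ll j) m - step z m - step (z + ll m) j
     = (oe (vx z) (vx (z + sI {j})) + oe (vx (z + sI {j})) (vx (z + sI {j, m})) + oe (vx (z + sI {j, m})) (vx z))
     - (oe (vx z) (vx (z + sI {m})) + oe (vx (z + sI {m})) (vx (z + sI {j, m})) + oe (vx (z + sI {j, m})) (vx z))"
    unfolding step_def ll_sI e1 e2 by simp
  then show ?thesis using bnd_diff[OF T1 T2] by simp
qed

definition Dq :: "nat \<Rightarrow> nat \<Rightarrow> int \<Rightarrow> int \<Rightarrow> int \<Rightarrow> nat \<Rightarrow> nat \<Rightarrow> int" where
  "Dq j m z a b = Q z j a + Q (z + a * ll j) m b - Q z m b - Q (z + b * ll m) j a"

lemma Dq_add_a: "Dq j m z (a1 + a2) b = Dq j m z a1 b + Dq j m (z + a1 * ll j) a2 b"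
proof -
  have "Q z j (a1 + a2) = Q z j a1 + Q (z + a1 * ll j) j a2" by (rule Q_add)
  moreover have "Q (z + b * ll m) j (a1 + a2) = Q (z + b * ll m) j a1 + Q (z + a1 * ll j + b * ll m) j a2"
    using Q_add[of "z + b * ll m" j a1 a2] by (simp add: algebra_simps)
  moreover have "z + (a1 + a2) * ll j = z + a1 * ll j + a2 * ll j" by (simp add: algebra_simps)
  ultimately show ?thesis unfolding Dq_def by (simp add: algebra_simps)
qed

lemma Dq_add_b: "Dq j m z a (b1 + b2) = Dq j m z a b1 + Dq j m (z + b1 * ll m) a b2"
proof -
  have "Q z m (b1 + b2) = Q z m b1 + Q (z + b1 * ll m) m b2" by (rule Q_add)
  moreover have "Q (z + a * ll j) m (b1 + b2) = Q (z + a * ll j) m b1 + Q (z + b1 * ll m + a * ll j) m b2"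
    using Q_add[of "z + a * ll j" m b1 b2] by (simp add: algebra_simps)
  moreover have "z + (b1 + b2) * ll m = z + b1 * ll m + b2 * ll m" by (simp add: algebra_simps)
  ultimately show ?thesis unfolding Dq_def by (simp add: algebra_simps)
qed

lemma Dq_a0: "Dq j m z 0 b = 0" unfolding Dq_def Q_0 by simp
lemma Dq_b0: "Dq j m z a 0 = 0" unfolding Dq_def Q_0 by simp

lemma Dq_11: assumes "j < k" "m < k" "j \<noteq> m" shows "bnd (Dq j m z 1 1)"
  unfolding Dq_def Q_1 using sq_unit[OF assms, of z] by simp

lemma Dq_1b: assumes "j < k" "m < k" "j \<noteq> m" shows "bnd (Dq j m z 1 b)"
proof -
  have "\<forall>z. bnd (Dq j m z 1 b)"
  proof (induction b rule: int_induct[where k = 0])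
    case base then show ?case unfolding Dq_b0 using bnd_0 by blast
  next
    case (step1 i)
    show ?case
    proof
      fix z show "bnd (Dq j m z 1 (i + 1))"
        unfolding Dq_add_b using step1(2) Dq_11[OF assms] bnd_add by blast
    qed
  next
    case (step2 i)
    show ?case
    proof
      fix z
      have "Dq j m z 1 i = Dq j m z 1 (i - 1) + Dq j m (z + (i - 1) * ll m) 1 1"
        using Dq_add_b[of j m z 1 "i - 1" 1] by simp
      then have "Dq j m z 1 (i - 1) = Dq j m z 1 i - Dq j m (z + (i - 1) * ll m) 1 1" by simp
      then show "bnd (Dq j m z 1 (i - 1))" using step2(2) Dq_11[OF assms] bnd_diff by metis
    qed
  qed
  then show ?thesis by blast
qed

lemma Dq_bnd: assumes "j < k" "m < k" "j \<noteq> m" shows "bnd (Dq j m z a b)"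
proof -
  have "\<forall>z. bnd (Dq j m z a b)"
  proof (induction a rule: int_induct[where k = 0])
    case base then show ?case unfolding Dq_a0 using bnd_0 by blast
  next
    case (step1 i)
    show ?case
    proof
      fix z show "bnd (Dq j m z (i + 1) b)"
        unfolding Dq_add_a using step1(2) Dq_1b[OF assms] bnd_add by blast
    qed
  next
    case (step2 i)
    show ?case
    proof
      fix z
      have "Dq j m z i b = Dq j m z (i - 1) b + Dq j m (z + (i - 1) * ll j) 1 b"
        using Dq_add_a[of j m z "i - 1" 1 b] by simp
      then have "Dq j m z (i - 1) b = Dq j m z i b - Dq j m (z + (i - 1) * ll j) 1 b" by simp
      then show "bnd (Dq j m z (i - 1) b)" using step2(2) Dq_1b[OF assms] bnd_diff by metis
    qed
  qed
  then show ?thesis by blast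
qed

lemma Q_comm: assumes "j < k" "m < k" "j \<noteq> m"
  shows "Q z j a + Q (z + a * ll j) m b \<approx> Q z m b + Q (z + b * ll m) j a"
  unfolding eqv_def using Dq_bnd[OF assms, of z a b] unfolding Dq_def by (simp add: algebra_simps)

end

context tonn begin

lemma CT:
  assumes "j < k" "j \<notin> set ms" "set ms \<subseteq> {0..<k}"
  shows "Q x j a + PL (x + a * ll j) ms v \<approx> PL x ms v + Q (x + dl ms v) j a"
  using assms(2,3)
proof (induction ms arbitrary: x)
  case Nil then show ?case using eqv_refl by simp
next
  case (Cons m ms)
  have m: "m < k" "j \<noteq> m" using Cons.prems by auto
  define x' where "x' = x + v m * ll m"
  have 1: "Q x j a + Q (x + a * ll j) m (v m) \<approx> Q x m (v m) + Q x' j a"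
    unfolding x'_def by (rule Q_comm[OF assms(1) m(1) m(2)])
  have 2: "Q x' j a + PL (x' + a * ll j) ms v \<approx> PL x' ms v + Q (x' + dl ms v) j a"
    by (rule Cons.IH) (use Cons.prems in auto)
  have e: "x + a * ll j + v m * ll m = x' + a * ll j" unfolding x'_def by simp
  have e': "PL (x + a * ll j + v m * ll m) ms v = PL (x' + a * ll j) ms v" by (simp only: e)
  have "Q x j a + PL (x + a * ll j) (m # ms) v
      = Q x j a + (Q (x + a * ll j) m (v m) + PL (x + a * ll j + v m * ll m) ms v)"
    by (simp only: PL.simps)
  also have "\<dots> = (Q x j a + Q (x + a * ll j) m (v m)) + PL (x' + a * ll j) ms v"
    unfolding e' by (rule add.assoc[symmetric])
  also have "\<dots> \<approx> (Q x m (v m) + Q x' j a) + PL (x' + a * ll j) ms v"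
    by (rule eqv_add[OF 1 eqv_refl])
  also have "\<dots> = Q x m (v m) + (Q x' j a + PL (x' + a * ll j) ms v)" by (simp add: add.assoc)
  also have "\<dots> \<approx> Q x m (v m) + (PL x' ms v + Q (x' + dl ms v) j a)"
    by (rule eqv_add[OF eqv_refl 2])
  also have "\<dots> = PL x (m # ms) v + Q (x + dl (m # ms) v) j a"
    unfolding x'_def by (simp add: add.assoc)
  finally show ?case .
qed

lemma upt_split: "j < k \<Longrightarrow> [0..<k] = [0..<j] @ j # [Suc j..<k]"
proof -
  assume jk: "j < k"
  have "[0..<k] = [0..<j] @ [j..<k]" using upt_add_eq_append[of 0 j "k - j"] jk by simp
  also have "[j..<k] = j # [Suc j..<k]" by (rule upt_conv_Cons[OF jk])
  finally show ?thesis .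
qed

lemma U:
  assumes jk: "j < k"
  shows "P x v + Q (x + dot v) j a \<approx> P x (v(j := v j + a))"
proof -
  define v' where "v' = v(j := v j + a)"
  define pre where "pre = [0..<j]"
  define tl where "tl = [Suc j..<k]"
  have sp: "[0..<k] = pre @ j # tl" unfolding pre_def tl_def by (rule upt_split[OF jk])
  have jpre: "j \<notin> set pre" "j \<notin> set tl" unfolding pre_def tl_def by auto
  have tlk: "set tl \<subseteq> {0..<k}" unfolding tl_def by auto
  have a1: "PL x pre v' = PL x pre v" "dl pre v' = dl pre v"
    using jpre(1) by (auto simp: v'_def intro!: PL_cong dl_cong)
  have a2: "PL y tl v' = PL y tl v" for y
    using jpre(2) by (auto simp: v'_def intro!: PL_cong)
  define y where "y = x + dl pre v"
  define z where "z = y + v j * ll j"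
  have Pv: "P x v = PL x pre v + (Q y j (v j) + PL z tl v)"
    unfolding P_def sp PL_append y_def z_def by simp
  have dv: "x + dot v = z + dl tl v" unfolding dot_def sp y_def z_def by (simp add: algebra_simps)
  have vj: "v' j = v j + a" unfolding v'_def by simp
  have Pv': "P x v' = PL x pre v + (Q y j (v j) + (Q z j a + PL (z + a * ll j) tl v))"
  proof -
    have "P x v' = PL x pre v' + (Q (x + dl pre v') j (v' j) + PL (x + dl pre v' + v' j * ll j) tl v')"
      unfolding P_def sp PL_append by simp
    also have "\<dots> = PL x pre v + (Q y j (v j + a) + PL (z + a * ll j) tl v)"
      unfolding a1 a2 unfolding y_def z_def using vj by (simp add: algebra_simps)
    also have "Q y j (v j + a) = Q y j (v j) + Q z j a" unfolding z_def by (rule Q_add)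
    finally show ?thesis by (simp only: add.assoc)
  qed
  have "P x v + Q (x + dot v) j a = PL x pre v + (Q y j (v j) + (PL z tl v + Q (z + dl tl v) j a))"
    unfolding Pv dv by (simp add: add.assoc)
  also have "\<dots> \<approx> PL x pre v + (Q y j (v j) + (Q z j a + PL (z + a * ll j) tl v))"
    by (intro eqv_add eqv_refl eqv_sym[OF CT[OF jk jpre(2) tlk]])
  also have "\<dots> = P x v'" unfolding Pv' ..
  finally show ?thesis unfolding v'_def .
qed

lemma dot_upd: assumes "m < k" shows "dot (v(m := v m + c)) = dot v + c * ll m"
proof -
  have "dot (v(m := v m + c)) = (\<Sum>i<k. v i * ll i + (if i = m then c * ll m else 0))"
    unfolding dot_sum by (rule sum.cong) (auto simp: algebra_simps)
  also have "\<dots> = dot v + c * ll m" unfolding dot_sum using assms by (simp add: sum.distrib)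
  finally show ?thesis .
qed

lemma A':
  assumes "distinct ms" "set ms \<subseteq> {0..<k}"
  shows "P x v + PL (x + dot v) ms w \<approx> P x (\<lambda>i. v i + (if i \<in> set ms then w i else 0))"
  using assms
proof (induction ms arbitrary: v)
  case Nil then show ?case using eqv_refl by simp
next
  case (Cons m ms)
  have m: "m < k" "m \<notin> set ms" using Cons.prems by auto
  define v' where "v' = v(m := v m + w m)"
  have dv': "dot v' = dot v + w m * ll m" unfolding v'_def by (rule dot_upd[OF m(1)])
  have "P x v + PL (x + dot v) (m # ms) w = (P x v + Q (x + dot v) m (w m)) + PL (x + dot v') ms w"
    using dv' by (simp add: add.assoc)
  also have "\<dots> \<approx> P x v' + PL (x + dot v') ms w"
    unfolding v'_def by (rule eqv_add[OF U[OF m(1)] eqv_refl])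
  also have "\<dots> \<approx> P x (\<lambda>i. v' i + (if i \<in> set ms then w i else 0))"
    by (rule Cons.IH) (use Cons.prems in auto)
  also have "(\<lambda>i. v' i + (if i \<in> set ms then w i else 0)) = (\<lambda>i. v i + (if i \<in> set (m # ms) then w i else 0))"
    unfolding v'_def using m(2) by (auto simp: fun_eq_iff)
  finally show ?case .
qed

lemma Aadd: "P x v + P (x + dot v) w \<approx> P x (\<lambda>i. v i + w i)"
proof -
  have "P x v + P (x + dot v) w \<approx> P x (\<lambda>i. v i + (if i \<in> set [0..<k] then w i else 0))"
    unfolding P_def[of "x + dot v"] by (rule A') auto
  also have "P x (\<lambda>i. v i + (if i \<in> set [0..<k] then w i else 0)) = P x (\<lambda>i. v i + w i)"
    by (rule P_cong) simp
  finally show ?thesis .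
qed

lemma dot_chi: assumes "I \<subseteq> {0..<k}" shows "dot (chi I) = sI I"
proof -
  have "dot (chi I) = (\<Sum>i<k. if i \<in> I then ll i else 0)"
    unfolding dot_sum chi_def by (rule sum.cong) auto
  also have "\<dots> = (\<Sum>i\<in>{..<k} \<inter> I. ll i)" by (simp add: sum.inter_restrict)
  also have "{..<k} \<inter> I = I" using assms by auto
  finally show ?thesis unfolding sI_def .
qed

lemma chi_empty: "chi {} = (\<lambda>_. 0)" unfolding chi_def by auto

lemma chi_insert: "chi (insert m J) = (chi J)(m := chi J m + (if m \<in> J then 0 else 1))"
  unfolding chi_def by (auto simp: fun_eq_iff)

lemma Estraight:
  assumes "I \<subseteq> {0..<k}" "I \<noteq> {}" "I \<noteq> {0..<k}"
  shows "oe (vx x) (vx (x + sI I)) \<approx> P x (chi I)"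
proof -
  have fin: "finite I" using assms(1) finite_subset by blast
  show ?thesis using fin assms(2) assms(1,3)
  proof (induction I rule: finite_ne_induct)
    case (singleton m)
    have mk: "m < k" using singleton by auto
    have "P x (chi {m}) = P x ((\<lambda>_. 0)(m := (\<lambda>_. 0) m + 1))"
      by (rule P_cong) (simp add: chi_def)
    also have "\<dots> \<approx> P x (\<lambda>_. 0) + Q (x + dot (\<lambda>_. 0)) m 1" by (rule eqv_sym[OF U[OF mk]])
    also have "\<dots> = step x m" using P_zero Q_1 by (simp add: dot_sum)
    also have "\<dots> = oe (vx x) (vx (x + sI {m}))" unfolding step_def ll_sI ..
    finally show ?case by (rule eqv_sym)
  next
    case (insert m J)
    have mk: "m < k" and Jk: "J \<subseteq> {0..<k}" using insert.prems by auto
    have Jne: "J \<noteq> {0..<k}" using insert.hyps insert.prems by auto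
    have IH: "oe (vx x) (vx (x + sI J)) \<approx> P x (chi J)" using insert.IH Jk Jne by blast
    have sIi: "sI (insert m J) = sI J + ll m" unfolding sI_def using insert.hyps by simp
    have tc: "bnd (oe (vx x) (vx (x + sI J)) + oe (vx (x + sI J)) (vx (x + sI (insert m J)))
              + oe (vx (x + sI (insert m J))) (vx x))"
      by (rule tri_chain) (use insert.hyps insert.prems in auto)
    have st: "oe (vx (x + sI J)) (vx (x + sI (insert m J))) = step (x + sI J) m"
      unfolding step_def sIi by (simp add: add.assoc)
    have "P x (chi J) + Q (x + dot (chi J)) m 1 \<approx> P x ((chi J)(m := chi J m + 1))" by (rule U[OF mk])
    moreover have "(chi J)(m := chi J m + 1) = chi (insert m J)"
      using insert.hyps unfolding chi_def by (auto simp: fun_eq_iff)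
    moreover have "Q (x + dot (chi J)) m 1 = step (x + sI J) m" using dot_chi[OF Jk] Q_1 by simp
    ultimately have 1: "P x (chi J) + step (x + sI J) m \<approx> P x (chi (insert m J))" by simp
    have "oe (vx x) (vx (x + sI (insert m J)))
          = - oe (vx (x + sI (insert m J))) (vx x)" by (rule oe_anti)
    also have "\<dots> \<approx> oe (vx x) (vx (x + sI J)) + step (x + sI J) m"
    proof -
      have tc': "bnd (oe (vx x) (vx (x + sI J)) + step (x + sI J) m + oe (vx (x + sI (insert m J))) (vx x))"
        using tc unfolding st .
      have "- oe (vx (x + sI (insert m J))) (vx x) - (oe (vx x) (vx (x + sI J)) + step (x + sI J) m)
         = - (oe (vx x) (vx (x + sI J)) + step (x + sI J) m + oe (vx (x + sI (insert m J))) (vx x))"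
        by (simp add: algebra_simps)
      moreover have "bnd (- (oe (vx x) (vx (x + sI J)) + step (x + sI J) m + oe (vx (x + sI (insert m J))) (vx x)))"
        by (rule bnd_uminus[OF tc'])
      ultimately show ?thesis unfolding eqv_def by (simp only:)
    qed
    also have "\<dots> \<approx> P x (chi J) + step (x + sI J) m" by (rule eqv_add[OF IH eqv_refl])
    also have "\<dots> \<approx> P x (chi (insert m J))" by (rule 1)
    finally show ?case .
  qed
qed

end

lemma bezout_list: "\<exists>\<beta>::nat\<Rightarrow>int. (\<Sum>i<length xs. \<beta> i * int (xs!i)) = int (Gcd (set xs))"
proof (induction xs)
  case Nil then show ?case by simp
next
  case (Cons a xs)
  obtain \<beta> where b: "(\<Sum>i<length xs. \<beta> i * int (xs!i)) = int (Gcd (set xs))" using Cons by blast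
  obtain u w where uw: "u * int a + w * int (Gcd (set xs)) = gcd (int a) (int (Gcd (set xs)))"
    using bezout_int by blast
  define \<beta>' where "\<beta>' i = (if i = 0 then u else w * \<beta> (i - 1))" for i
  have "(\<Sum>i<length (a # xs). \<beta>' i * int ((a # xs)!i)) = u * int a + (\<Sum>i<length xs. w * (\<beta> i * int (xs!i)))"
    unfolding \<beta>'_def by (simp add: sum.lessThan_Suc_shift algebra_simps del: sum.lessThan_Suc)
  also have "\<dots> = u * int a + w * int (Gcd (set xs))" by (simp add: sum_distrib_left[symmetric] b)
  also have "\<dots> = int (Gcd (set (a # xs)))" using uw by (simp add: gcd_int_int_eq)
  finally show ?case by blast
qed

context tonn begin

lemma dot_scale: "dot (\<lambda>i. c * y i) = c * dot y"
  unfolding dot_sum by (simp add: sum_distrib_left algebra_simps)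

lemma dot_add: "dot (\<lambda>i. y i + w i) = dot y + dot w"
  unfolding dot_sum by (simp add: sum.distrib algebra_simps)

lemma dot_zero: "dot (\<lambda>_. 0) = 0" unfolding dot_sum by simp

lemma dot_sumv: "dot (\<lambda>i. \<Sum>s\<in>S. g s i) = (\<Sum>s\<in>S. dot (g s))"
  unfolding dot_sum by (simp add: sum_distrib_right sum.swap[of _ "{..<k}"])

definition Om :: "(nat \<Rightarrow> int) \<Rightarrow> nat \<Rightarrow> nat \<Rightarrow> int" where "Om y = P 0 y"

lemma smul_0: "smul 0 a = 0" unfolding smul_def by (rule ext)+ simp
lemma smul_1: "smul 1 a = a" unfolding smul_def by (rule ext)+ simp
lemma smul_z: "smul c 0 = 0" unfolding smul_def by (rule ext)+ simp
lemma smul_add_c: "smul (c + d) a = smul c a + smul d a" unfolding smul_def by (rule ext)+ (simp add: algebra_simps)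
lemma smul_add: "smul c (a + b) = smul c a + smul c b" unfolding smul_def by (rule ext)+ (simp add: algebra_simps)
lemma smul_diff: "smul c (a - b) = smul c a - smul c b" unfolding smul_def by (rule ext)+ (simp add: algebra_simps)

lemma Om_add: assumes "int n dvd dot y1" shows "Om y1 + Om y2 \<approx> Om (\<lambda>i. y1 i + y2 i)"
proof -
  obtain c where c: "dot y1 = int n * c" using assms by blast
  have "P 0 y1 + P (0 + dot y1) y2 \<approx> P 0 (\<lambda>i. y1 i + y2 i)" by (rule Aadd)
  moreover have "P (0 + dot y1) y2 = P 0 y2" using P_per[of 0 c y2] c by simp
  ultimately show ?thesis unfolding Om_def by simp
qed

lemma Om_zero: "Om (\<lambda>_. 0) = 0" unfolding Om_def by (rule P_zero)

lemma Om_smul: assumes "int n dvd dot y" shows "Om (\<lambda>i. c * y i) \<approx> smul c (Om y)"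
proof (induction c rule: int_induct[where k = 0])
  case base then show ?case using Om_zero smul_0 eqv_refl by simp
next
  case (step1 c)
  have d: "int n dvd dot (\<lambda>i. c * y i)" using assms dot_scale by simp
  have "Om (\<lambda>i. (c + 1) * y i) = Om (\<lambda>i. c * y i + y i)" by (simp add: algebra_simps)
  also have "\<dots> \<approx> Om (\<lambda>i. c * y i) + Om y" by (rule eqv_sym[OF Om_add[OF d]])
  also have "\<dots> \<approx> smul c (Om y) + Om y" by (rule eqv_add[OF step1(2) eqv_refl])
  also have "\<dots> = smul (c + 1) (Om y)" by (simp add: smul_add_c smul_1)
  finally show ?case .
next
  case (step2 c)
  have d: "int n dvd dot (\<lambda>i. (c - 1) * y i)" using assms dot_scale by simp
  have "Om (\<lambda>i. c * y i) = Om (\<lambda>i. (c - 1) * y i + y i)" by (simp add: algebra_simps)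
  also have "\<dots> \<approx> Om (\<lambda>i. (c - 1) * y i) + Om y" by (rule eqv_sym[OF Om_add[OF d]])
  finally have "Om (\<lambda>i. (c - 1) * y i) + Om y \<approx> smul c (Om y)" using step2(2) eqv_sym eqv_trans by blast
  then have "Om (\<lambda>i. (c - 1) * y i) + Om y - Om y \<approx> smul c (Om y) - Om y" by (rule eqv_diff[OF _ eqv_refl])
  moreover have "smul c (Om y) - Om y = smul (c - 1) (Om y)"
    using smul_add_c[of "c - 1" 1 "Om y"] smul_1 by simp
  ultimately show ?case by simp
qed

lemma Om_sum:
  assumes "finite S" "\<And>s. s \<in> S \<Longrightarrow> int n dvd dot (f s)"
  shows "(\<Sum>s\<in>S. smul (c s) (Om (f s))) \<approx> Om (\<lambda>i. \<Sum>s\<in>S. c s * f s i)"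
  using assms
proof (induction S rule: finite_induct)
  case empty then show ?case using Om_zero eqv_refl by simp
next
  case (insert s F)
  have d: "int n dvd dot (\<lambda>i. c s * f s i)" using insert.prems dot_scale by simp
  have "(\<Sum>t\<in>insert s F. smul (c t) (Om (f t))) = smul (c s) (Om (f s)) + (\<Sum>t\<in>F. smul (c t) (Om (f t)))"
    using insert.hyps by simp
  also have "\<dots> \<approx> Om (\<lambda>i. c s * f s i) + Om (\<lambda>i. \<Sum>t\<in>F. c t * f t i)"
    by (rule eqv_add[OF eqv_sym[OF Om_smul] insert.IH]) (use insert.prems in auto)
  also have "\<dots> \<approx> Om (\<lambda>i. c s * f s i + (\<Sum>t\<in>F. c t * f t i))" by (rule Om_add[OF d])
  also have "(\<lambda>i. c s * f s i + (\<Sum>t\<in>F. c t * f t i)) = (\<lambda>i. \<Sum>t\<in>insert s F. c t * f t i)"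
    using insert.hyps by simp
  finally show ?case .
qed

lemma Om_one: "Om (\<lambda>_. 1) \<approx> 0"
proof -
  define J where "J = {0..<k - 1}"
  have k1: "k - 1 < k" "0 < k - 1" using k2 by auto
  have J: "J \<subseteq> {0..<k}" "J \<noteq> {}" "J \<noteq> {0..<k}" unfolding J_def using k1 by auto
  have S: "{k - 1} \<subseteq> {0..<k}" "{k - 1} \<noteq> {}" using k1 k2 by auto
  have S3: "{k - 1} \<noteq> {0..<k}"
  proof
    assume "{k - 1} = {0..<k}"
    moreover have "(0::nat) \<in> {0..<k}" using k2 by auto
    ultimately have "(0::nat) = k - 1" by blast
    then show False using k1 by simp
  qed
  have sn: "sI J + sI {k - 1} = int n"
  proof -
    have "{0..<k} = J \<union> {k - 1}" unfolding J_def using k1 by auto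
    then have "sI {0..<k} = sI J + sI {k - 1}" unfolding sI_def J_def by (simp add: sum.union_disjoint)
    then show ?thesis using n_eq by simp
  qed
  have "P 0 (chi J) + P (0 + dot (chi J)) (chi {k - 1}) \<approx> P 0 (\<lambda>i. chi J i + chi {k - 1} i)"
    by (rule Aadd)
  also have "P 0 (\<lambda>i. chi J i + chi {k - 1} i) = P 0 (\<lambda>_. 1)"
    by (rule P_cong) (auto simp: chi_def J_def)
  finally have 1: "P 0 (chi J) + P (sI J) (chi {k - 1}) \<approx> Om (\<lambda>_. 1)"
    unfolding Om_def using dot_chi[OF J(1)] by simp
  have 2: "oe (vx 0) (vx (0 + sI J)) \<approx> P 0 (chi J)" by (rule Estraight[OF J])
  have 3: "oe (vx (sI J)) (vx (sI J + sI {k - 1})) \<approx> P (sI J) (chi {k - 1})" by (rule Estraight[OF S S3])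
  have v0: "vx (sI J + sI {k - 1}) = vx 0" using sn vx_per[of 0 1] by simp
  have "Om (\<lambda>_. 1) \<approx> P 0 (chi J) + P (sI J) (chi {k - 1})" by (rule eqv_sym[OF 1])
  also have "\<dots> \<approx> oe (vx 0) (vx (sI J)) + oe (vx (sI J)) (vx 0)"
    using eqv_add[OF eqv_sym[OF 2] eqv_sym[OF 3]] v0 by simp
  also have "\<dots> = 0" using oe_anti[of "vx (sI J)" "vx 0"] by simp
  finally show ?thesis .
qed

end

context tonn begin

lemma dot_lin3: "dot (\<lambda>i. a i + b i - c i) = dot a + dot b - dot c"
  unfolding dot_sum by (simp add: sum.distrib sum_subtractf algebra_simps)

lemma edge_eqv:
  assumes beta: "dot \<beta> = 1"
    and uv: "u < n" "v < n" and I: "I \<subseteq> {0..<k}" "I \<noteq> {}" "I \<noteq> {0..<k}"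
    and c: "[int v - int u = sI I] (mod int n)"
  shows "oe u v \<approx> P 0 (\<lambda>i. int v * \<beta> i) - P 0 (\<lambda>i. int u * \<beta> i)
           + Om (\<lambda>i. int u * \<beta> i + chi I i - int v * \<beta> i)"
    "int n dvd dot (\<lambda>i. int u * \<beta> i + chi I i - int v * \<beta> i)"
proof -
  define lu where "lu = (\<lambda>i. int u * \<beta> i)"
  define lv where "lv = (\<lambda>i. int v * \<beta> i)"
  define \<delta> where "\<delta> = (\<lambda>i. int u * \<beta> i + chi I i - int v * \<beta> i)"
  have dlu: "dot lu = int u" unfolding lu_def using dot_scale[of "int u" \<beta>] beta by simp
  have dlv: "dot lv = int v" unfolding lv_def using dot_scale[of "int v" \<beta>] beta by simp
  have dd: "dot \<delta> = int u + sI I - int v"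
    unfolding \<delta>_def using dot_lin3[of lu "chi I" lv] dlu dlv dot_chi[OF I(1)] unfolding lu_def lv_def by simp
  have dvd1: "int n dvd (int v - int u - sI I)" using c by (simp add: cong_iff_dvd_diff)
  then have dvd2: "int n dvd dot \<delta>" unfolding dd
    by (metis dvd_minus_iff minus_diff_eq diff_diff_eq add.commute)
  then show "int n dvd dot (\<lambda>i. int u * \<beta> i + chi I i - int v * \<beta> i)" unfolding \<delta>_def .
  obtain cc where cc: "dot \<delta> = int n * cc" using dvd2 by blast
  have "[int v = int u + sI I] (mod int n)" using dvd1 by (simp add: cong_iff_dvd_diff algebra_simps)
  then have "(int u + sI I) mod int n = int v" using uv unfolding cong_def by simp
  then have vv: "vx (int u + sI I) = v" unfolding vx_def by simp
  have uu: "vx (int u) = u" using vx_int uv by simp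
  have e2: "oe u v \<approx> P (int u) (chi I)"
    using Estraight[OF I, of "int u"] unfolding vv uu .
  have A1: "P 0 lu + P (int u) (chi I) \<approx> P 0 (\<lambda>i. lv i + \<delta> i)"
  proof -
    have "P 0 lu + P (0 + dot lu) (chi I) \<approx> P 0 (\<lambda>i. lu i + chi I i)" by (rule Aadd)
    moreover have "(\<lambda>i. lu i + chi I i) = (\<lambda>i. lv i + \<delta> i)" unfolding lu_def lv_def \<delta>_def by auto
    ultimately show ?thesis using dlu by simp
  qed
  have A2: "P 0 lv + P (int v) \<delta> \<approx> P 0 (\<lambda>i. lv i + \<delta> i)"
    using Aadd[of 0 lv \<delta>] dlv by simp
  have A3: "Om \<delta> + P 0 lv \<approx> P 0 (\<lambda>i. lv i + \<delta> i)"
  proof -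
    have "P 0 \<delta> + P (0 + dot \<delta>) lv \<approx> P 0 (\<lambda>i. \<delta> i + lv i)" by (rule Aadd)
    moreover have "P (0 + dot \<delta>) lv = P 0 lv" using P_per[of 0 cc lv] cc by simp
    moreover have "(\<lambda>i. \<delta> i + lv i) = (\<lambda>i. lv i + \<delta> i)" by (auto simp: add.commute)
    ultimately show ?thesis unfolding Om_def by simp
  qed
  have "oe u v \<approx> P (int u) (chi I)" by (rule e2)
  also have "P (int u) (chi I) = (P 0 lu + P (int u) (chi I)) - P 0 lu" by simp
  also have "\<dots> \<approx> P 0 (\<lambda>i. lv i + \<delta> i) - P 0 lu" by (rule eqv_diff[OF A1 eqv_refl])
  also have "\<dots> \<approx> (Om \<delta> + P 0 lv) - P 0 lu" by (rule eqv_diff[OF eqv_sym[OF A3] eqv_refl])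
  also have "\<dots> = P 0 lv - P 0 lu + Om \<delta>" by (simp add: algebra_simps)
  finally show "oe u v \<approx> P 0 (\<lambda>i. int v * \<beta> i) - P 0 (\<lambda>i. int u * \<beta> i)
           + Om (\<lambda>i. int u * \<beta> i + chi I i - int v * \<beta> i)" unfolding lu_def lv_def \<delta>_def .
qed

lemma edge_data:
  assumes "edge L u v"
  shows "Ltype L u v \<subseteq> {0..<k}" "Ltype L u v \<noteq> {}" "Ltype L u v \<noteq> {0..<k}"
    "[int v - int u = sI (Ltype L u v)] (mod int n)" "u < n" "v < n" "u < v"
proof -
  have t: "tonnetz_simplex L {u, v}" "u < v" using assms unfolding edge_def by auto
  then have uv: "u \<noteq> v" by simp
  obtain x \<sigma> p q where e: "\<sigma> permutes {0..<k}" "p < k" "q < k" "p \<noteq> q"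
    "u = vx (x + Sp \<sigma> p)" "v = vx (x + Sp \<sigma> q)"
    by (rule edge_pos[OF t(1) uv])
  have L1: "Ltype L u v = Ipq \<sigma> p q" unfolding e(5,6) by (rule Ltype_pos(1)[OF e(1-4)])
  have c: "[int v - int u = sI (Ipq \<sigma> p q)] (mod int n)" unfolding e(5,6) by (rule Ltype_pos(5)[OF e(1-4)])
  show "Ltype L u v \<subseteq> {0..<k}" "Ltype L u v \<noteq> {}" "Ltype L u v \<noteq> {0..<k}"
    "[int v - int u = sI (Ltype L u v)] (mod int n)"
    unfolding L1 using c Ltype_pos(2-4)[OF e(1-4)] by auto
  show "u < n" "v < n" using simplex_lt[OF t(1)] by auto
  show "u < v" by (rule t(2))
qed

lemma cyc_int:
  assumes "cycle1 L z"
  shows "(\<Sum>u<n. \<Sum>v<n. z u v * (g v - g u)) = (0::int)"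
proof -
  have bd: "(\<Sum>u<n. z u w) - (\<Sum>v<n. z w v) = 0" for w using assms unfolding cycle1_def bd1_def by simp
  have "(\<Sum>u<n. \<Sum>v<n. z u v * (g v - g u)) = (\<Sum>u<n. \<Sum>v<n. z u v * g v) - (\<Sum>u<n. \<Sum>v<n. z u v * g u)"
    by (simp add: right_diff_distrib sum_subtractf)
  also have "(\<Sum>u<n. \<Sum>v<n. z u v * g v) = (\<Sum>v<n. \<Sum>u<n. z u v * g v)" by (rule sum.swap)
  also have "\<dots> = (\<Sum>w<n. g w * (\<Sum>u<n. z u w))" by (simp add: sum_distrib_left mult.commute)
  also have "(\<Sum>u<n. \<Sum>v<n. z u v * g u) = (\<Sum>w<n. g w * (\<Sum>v<n. z w v))"
    by (simp add: sum_distrib_left mult.commute)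
  also have "(\<Sum>w<n. g w * (\<Sum>u<n. z u w)) - (\<Sum>w<n. g w * (\<Sum>v<n. z w v))
      = (\<Sum>w<n. g w * ((\<Sum>u<n. z u w) - (\<Sum>v<n. z w v)))"
    by (simp add: sum_subtractf right_diff_distrib)
  also have "\<dots> = 0" using bd by simp
  finally show ?thesis .
qed

lemma z_decomp:
  assumes "chain1 L z"
  shows "z = (\<Sum>u<n. \<Sum>v<n. smul (z u v) (oe u v))"
proof (rule ext, rule ext)
  fix a b
  have zc: "z u v \<noteq> 0 \<Longrightarrow> edge L u v" for u v using assms unfolding chain1_def by blast
  have tm: "z u v * oe u v a b = (if u = a \<and> v = b then z u v else 0)" for u v
  proof (cases "z u v = 0")
    case False
    then have "u < v" using edge_data(7)[OF zc] by blast
    then show ?thesis unfolding oe_def by auto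
  qed auto
  have "(\<Sum>u<n. \<Sum>v<n. smul (z u v) (oe u v)) a b = (\<Sum>u<n. \<Sum>v<n. z u v * oe u v a b)"
    by (simp add: sum_app2 smul_def)
  also have "\<dots> = (\<Sum>u<n. \<Sum>v<n. if u = a \<and> v = b then z u v else 0)" unfolding tm ..
  also have "\<dots> = z a b"
  proof (cases "a < n \<and> b < n")
    case True
    have "(\<Sum>v<n. if u = a \<and> v = b then z u v else 0) = (if u = a then z a b else 0)" for u
      using True by (cases "u = a") simp_all
    then show ?thesis using True by simp
  next
    case False
    have "z a b = 0" using False zc edge_data(5,6) by blast
    moreover have "(\<Sum>u<n. \<Sum>v<n. if u = a \<and> v = b then z u v else 0) = 0"
      using False by (intro sum.neutral ballI) auto
    ultimately show ?thesis by simp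
  qed
  finally show "z a b = (\<Sum>u<n. \<Sum>v<n. smul (z u v) (oe u v)) a b" by simp
qed

end

context tonn begin

lemma part3:
  assumes cyc: "cycle1 L z" and om0: "omega_eval L z = (\<lambda>_. 0)"
  shows "bnd z"
proof -
  obtain \<beta>0 where b0: "(\<Sum>i<length L. \<beta>0 i * int (L!i)) = int (Gcd (set L))"
    using bezout_list by blast
  have beta: "dot \<beta>0 = 1" unfolding dot_sum ll_def using b0 red unfolding reduced_def by simp
  have ch: "chain1 L z" using cyc unfolding cycle1_def by simp
  have zc: "\<And>u v. z u v \<noteq> 0 \<Longrightarrow> edge L u v" using ch unfolding chain1_def by blast
  define I where "I u v = Ltype L u v" for u v
  define \<delta> where "\<delta> u v = (if z u v = 0 then (\<lambda>_. 0) else (\<lambda>i. int u * \<beta>0 i + chi (I u v) i - int v * \<beta>0 i))" for u v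
  define \<gamma> where "\<gamma> w = P 0 (\<lambda>i. int w * \<beta>0 i)" for w
  have tm: "smul (z u v) (oe u v) \<approx> smul (z u v) (\<gamma> v - \<gamma> u + Om (\<delta> u v))" for u v
  proof (cases "z u v = 0")
    case True then show ?thesis using eqv_refl smul_0 by simp
  next
    case False
    note E = edge_data[OF zc[OF False]]
    have "oe u v \<approx> \<gamma> v - \<gamma> u + Om (\<delta> u v)"
      unfolding \<gamma>_def \<delta>_def I_def using False edge_eqv(1)[OF beta E(5,6,1,2,3,4)] by simp
    then show ?thesis by (rule eqv_smul)
  qed
  have dv: "int n dvd dot (\<delta> u v)" for u v
  proof (cases "z u v = 0")
    case True then show ?thesis unfolding \<delta>_def using dot_zero by simp
  next
    case False
    note E = edge_data[OF zc[OF False]]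
    show ?thesis unfolding \<delta>_def I_def using False edge_eqv(2)[OF beta E(5,6,1,2,3,4)] by simp
  qed
  define h where "h i = (\<Sum>u<n. \<Sum>v<n. z u v * chi (I u v) i)" for i
  have Yh: "(\<Sum>u<n. 1 * (\<Sum>v<n. z u v * \<delta> u v i)) = h i" for i
  proof -
    have tY: "z u v * \<delta> u v i = z u v * chi (I u v) i - z u v * (int v * \<beta>0 i - int u * \<beta>0 i)" for u v
      unfolding \<delta>_def by (cases "z u v = 0") (simp_all add: algebra_simps)
    have "(\<Sum>u<n. 1 * (\<Sum>v<n. z u v * \<delta> u v i))
       = h i - (\<Sum>u<n. \<Sum>v<n. z u v * (int v * \<beta>0 i - int u * \<beta>0 i))"
      unfolding h_def tY by (simp add: sum_subtractf)
    also have "(\<Sum>u<n. \<Sum>v<n. z u v * (int v * \<beta>0 i - int u * \<beta>0 i)) = 0"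
      by (rule cyc_int[OF cyc])
    finally show ?thesis by simp
  qed
  have omh: "omega_eval L z i = int k * h i - (\<Sum>m<k. h m)" if ik: "i < k" for i
  proof -
    have t: "z u v * omega_vec L u v i = int k * (z u v * chi (I u v) i) - (\<Sum>m<k. z u v * chi (I u v) m)" for u v
    proof (cases "z u v = 0")
      case True then show ?thesis by simp
    next
      case False
      note E = edge_data[OF zc[OF False]]
      have "omega_vec L u v i = W (chi (I u v)) i"
        unfolding omega_vec_def using ik omega_W[OF _ E(1) ik] I_def by simp
      then have "omega_vec L u v i = int k * chi (I u v) i - (\<Sum>m<k. chi (I u v) m)"
        unfolding W_def .
      then show ?thesis by (simp add: right_diff_distrib sum_distrib_left mult.left_commute)
    qed
    have "omega_eval L z i = (\<Sum>u<n. \<Sum>v<n. int k * (z u v * chi (I u v) i) - (\<Sum>m<k. z u v * chi (I u v) m))"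
      unfolding omega_eval_def t ..
    also have "\<dots> = int k * h i - (\<Sum>u<n. \<Sum>v<n. \<Sum>m<k. z u v * chi (I u v) m)"
      unfolding h_def by (simp add: sum_subtractf sum_distrib_left)
    also have "(\<Sum>u<n. \<Sum>v<n. \<Sum>m<k. z u v * chi (I u v) m) = (\<Sum>m<k. h m)"
    proof -
      have "(\<Sum>u<n. \<Sum>v<n. \<Sum>m<k. z u v * chi (I u v) m) = (\<Sum>u<n. \<Sum>m<k. \<Sum>v<n. z u v * chi (I u v) m)"
        by (rule sum.cong[OF refl], rule sum.swap)
      also have "\<dots> = (\<Sum>m<k. \<Sum>u<n. \<Sum>v<n. z u v * chi (I u v) m)" by (rule sum.swap)
      finally show ?thesis unfolding h_def .
    qed
    finally show ?thesis .
  qed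
  have kpos: "0 < int k"
  proof -
    have "0 < k" using k2 by linarith
    then show ?thesis by simp
  qed
  have hc: "h i = h 0" if "i < k" for i
  proof -
    have "int k * h i = (\<Sum>m<k. h m)" using omh[OF that] om0 by (simp add: fun_eq_iff)
    moreover have "int k * h 0 = (\<Sum>m<k. h m)" using omh[of 0] om0 kpos by (simp add: fun_eq_iff)
    ultimately have "int k * h i = int k * h 0" by simp
    then have "int k = 0 \<or> h i = h 0" by (simp only: mult_cancel_left)
    then show ?thesis using kpos by linarith
  qed
  have S1: "(\<Sum>u<n. \<Sum>v<n. smul (z u v) (\<gamma> v - \<gamma> u)) = 0"
  proof (rule ext, rule ext)
    fix a b
    show "(\<Sum>u<n. \<Sum>v<n. smul (z u v) (\<gamma> v - \<gamma> u)) a b = 0 a b"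
      using cyc_int[OF cyc, of "\<lambda>w. \<gamma> w a b"] by (simp add: sum_app2 smul_def)
  qed
  have dv2: "int n dvd dot (\<lambda>i. \<Sum>v<n. z u v * \<delta> u v i)" for u
    unfolding dot_sumv dot_scale by (intro dvd_sum) (simp add: dv)
  have d1: "int n dvd dot (\<lambda>_. 1)" unfolding dot_sum using n_eq unfolding sI_def
    by (simp add: atLeast0LessThan)
  have "z = (\<Sum>u<n. \<Sum>v<n. smul (z u v) (oe u v))" by (rule z_decomp[OF ch])
  also have "\<dots> \<approx> (\<Sum>u<n. \<Sum>v<n. smul (z u v) (\<gamma> v - \<gamma> u + Om (\<delta> u v)))"
    by (intro eqv_sum finite_lessThan tm)
  also have "\<dots> = (\<Sum>u<n. \<Sum>v<n. smul (z u v) (\<gamma> v - \<gamma> u)) + (\<Sum>u<n. \<Sum>v<n. smul (z u v) (Om (\<delta> u v)))"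
    by (simp only: smul_add sum.distrib)
  also have "\<dots> = (\<Sum>u<n. \<Sum>v<n. smul (z u v) (Om (\<delta> u v)))" using S1 by simp
  also have "\<dots> \<approx> (\<Sum>u<n. Om (\<lambda>i. \<Sum>v<n. z u v * \<delta> u v i))"
    by (intro eqv_sum finite_lessThan Om_sum dv)
  also have "\<dots> = (\<Sum>u<n. smul 1 (Om (\<lambda>i. \<Sum>v<n. z u v * \<delta> u v i)))" by (simp only: smul_1)
  also have "\<dots> \<approx> Om (\<lambda>i. \<Sum>u<n. 1 * (\<Sum>v<n. z u v * \<delta> u v i))"
    by (intro Om_sum finite_lessThan dv2)
  also have "\<dots> = Om (\<lambda>i. h 0 * 1)"
    unfolding Om_def
  proof (rule P_cong)
    fix i assume "i < k"
    then show "(\<Sum>u<n. 1 * (\<Sum>v<n. z u v * \<delta> u v i)) = h 0 * 1" using Yh[of i] hc[of i] by simp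
  qed
  also have "\<dots> \<approx> smul (h 0) (Om (\<lambda>_. 1))" by (rule Om_smul[OF d1])
  also have "\<dots> \<approx> smul (h 0) 0" by (rule eqv_smul[OF Om_one])
  also have "\<dots> = 0" by (rule smul_z)
  finally have "z \<approx> 0" .
  then show ?thesis unfolding eqv_def by simp
qed

end

theorem proposition5p4:
  fixes L :: "nat list"
  assumes "length L \<ge> 2"
    and "\<forall>l\<in>set L. l > 0"
    and "generic L"
    and "reduced L"
  shows "(\<forall>u v. tonnetz_simplex L {u, v} \<and> u \<noteq> v \<longrightarrow> omega_vec L u v \<in> Lambda (length L))
    \<and> (\<forall>d. chain2 L d \<longrightarrow> omega_eval L (bd2 L d) = (\<lambda>_. 0))
    \<and> (\<forall>z. cycle1 L z \<longrightarrow> omega_eval L z = (\<lambda>_. 0) \<longrightarrow> (\<exists>d. chain2 L d \<and> z = bd2 L d))"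
proof -
  interpret tonn L using assms by unfold_locales
  show ?thesis using part1 part2 part3 unfolding bnd_def by blast
qed

end
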